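(* Let $\mathbf{Z}=\{\mathbf{z}_i\}_{i=1}^n$ be a $G$-networked sample, $\mathbf{w}$ an optimal weighting of $G$ and $\mathsf{s}=\mathsf{s}(G)$. Let $\mathcal{G}$ be a set of functions on $\mathcal{Z}$ and $c>0$ such that for each $g\in\mathcal{G}$: $\mathbf{E}(g)\ge0$, $\mathbf{E}(g^2)\le c\,\mathbf{E}(g)$, and $|g-\mathbf{E}(g)|\le B$ almost everywhere. Then for every $\epsilon>0$ and $0<\alpha\le1$, $$\Pr\Big\{\sup_{g\in\mathcal{G}}\frac{\mathbf{E}(g)-\mathbf{E}_{\mathbf{Z}_{\mathsf{s}}}(g)}{\sqrt{\mathbf{E}(g)+\epsilon}}>4\alpha\sqrt{\epsilon}\Big\}\le\mathcal{N}(\mathcal{G},\alpha\epsilon)\exp\Big\{-\frac{\alpha^2\,\mathsf{s}\,\epsilon}{2c+\frac23B}\Big\},$$ where $\mathbf{E}_{\mathbf{Z}_{\mathsf{s}}}(g)=\frac1{\mathsf{s}}\sum_{i=1}^n w_i\,g(\mathbf{z}_i)$.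
   Context: Networked setting: $G$ is a $k$-partite hypergraph with hyperedges $e_1,\dots,e_n$; vertex set partitioned into $V^{(1)},\dots,V^{(k)}$, each hyperedge containing exactly one vertex $e^{(j)}$ of each $V^{(j)}$. $\mathcal{X}=\mathcal{X}^{(1)}\times\cdots\times\mathcal{X}^{(k)}$ (compact metric spaces), $\mathcal{Y}=\mathbb{R}$, $\mathcal{Z}=\mathcal{X}\times\mathcal{Y}$. Each vertex $v\in V^{(j)}$ gets a feature $\phi(v)$ drawn independently from $\rho_j$, independently of the hypergraph. Hyperedge $e_i$ yields $\mathbf{z}_i=(\mathbf{x}_i,y_i)$, $\mathbf{x}_i=(\phi(e_i^{(1)}),\dots,\phi(e_i^{(k)}))$, labels conditionally independent given the features with $y_i\sim\rho_{y|\mathbf{x}}(\cdot\mid\mathbf{x}_i)$; $\rho=\rho_{y|\mathbf{x}}\rho_{\mathbf{x}}$ with $\rho_{\mathbf{x}}=\prod_j\rho_j$, and $\mathbf{E}(g)=\int_{\mathcal{Z}}g\,d\rho$. A feasible weighting is $\mathbf{w}$ with $w_i\ge0$ and $\sum_{i:\,v\in e_i}w_i\le1$ for every vertex $v$; $\mathsf{s}(G)=\max\sum_i w_i$ over feasible weightings, attained by an optimal weighting. $\mathcal{N}(\mathcal{G},\tau)$ is the minimal number of balls of radius $\tau$ in the sup norm covering $\mathcal{G}$. *)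

theory Defs
  imports "HOL-Probability.Probability"
begin

text \<open>Part j (j<k) has vertex
  set V j; hyperedge i contains exactly the vertex E i j of part j.  Vertices are
  identified as pairs (j, v) with v \<in> V j, so distinct parts are automatically disjoint.\<close>

definition kpartite_hypergraph ::
  "nat \<Rightarrow> nat \<Rightarrow> (nat \<Rightarrow> 'v set) \<Rightarrow> (nat \<Rightarrow> nat \<Rightarrow> 'v) \<Rightarrow> bool" where
  "kpartite_hypergraph k n V E \<longleftrightarrow>
     0 < k \<and> (\<forall>j<k. finite (V j)) \<and> (\<forall>i<n. \<forall>j<k. E i j \<in> V j)"

definition feasible_weighting ::
  "nat \<Rightarrow> nat \<Rightarrow> (nat \<Rightarrow> 'v set) \<Rightarrow> (nat \<Rightarrow> nat \<Rightarrow> 'v) \<Rightarrow> (nat \<Rightarrow> real) \<Rightarrow> bool" where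
  "feasible_weighting k n V E w \<longleftrightarrow>
     (\<forall>i<n. 0 \<le> w i) \<and>
     (\<forall>j<k. \<forall>v\<in>V j. (\<Sum>i\<in>{i. i < n \<and> E i j = v}. w i) \<le> 1)"

definition frac_matching_number ::
  "nat \<Rightarrow> nat \<Rightarrow> (nat \<Rightarrow> 'v set) \<Rightarrow> (nat \<Rightarrow> nat \<Rightarrow> 'v) \<Rightarrow> real" where
  "frac_matching_number k n V E =
     Sup {(\<Sum>i<n. w i) | w. feasible_weighting k n V E w}"

definition optimal_weighting ::
  "nat \<Rightarrow> nat \<Rightarrow> (nat \<Rightarrow> 'v set) \<Rightarrow> (nat \<Rightarrow> nat \<Rightarrow> 'v) \<Rightarrow> (nat \<Rightarrow> real) \<Rightarrow> bool" where
  "optimal_weighting k n V E w \<longleftrightarrow>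
     feasible_weighting k n V E w \<and> (\<Sum>i<n. w i) = frac_matching_number k n V E"

definition Zspace :: "nat \<Rightarrow> ((nat \<Rightarrow> 'x::topological_space) \<times> real) measure" where
  "Zspace k = (PiM {..<k} (\<lambda>_. borel)) \<Otimes>\<^sub>M borel"

definition Zset :: "nat \<Rightarrow> (nat \<Rightarrow> 'x set) \<Rightarrow> ((nat \<Rightarrow> 'x) \<times> real) set" where
  "Zset k X = PiE {..<k} X \<times> UNIV"

text \<open>The joint distribution rho = rho_{y|x} rho_x with rho_x = prod_j rho_j.\<close>
definition joint_dist ::
  "nat \<Rightarrow> (nat \<Rightarrow> 'x::topological_space measure) \<Rightarrow> ((nat \<Rightarrow> 'x) \<Rightarrow> real measure)
     \<Rightarrow> ((nat \<Rightarrow> 'x) \<times> real) measure" where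
  "joint_dist k \<rho> K = PiM {..<k} \<rho> \<bind> (\<lambda>x. distr (K x) (Zspace k) (\<lambda>y. (x, y)))"

definition expect :: "((nat \<Rightarrow> 'x::topological_space) \<times> real) measure \<Rightarrow> ((nat \<Rightarrow> 'x) \<times> real \<Rightarrow> real) \<Rightarrow> real" where
  "expect M g = integral\<^sup>L M g"

definition edge_features ::
  "nat \<Rightarrow> (nat \<Rightarrow> nat \<Rightarrow> 'v) \<Rightarrow> (nat \<times> 'v \<Rightarrow> 'x) \<Rightarrow> nat \<Rightarrow> (nat \<Rightarrow> 'x)" where
  "edge_features k E \<phi> i = restrict (\<lambda>j. \<phi> (j, E i j)) {..<k}"

text \<open>Distribution of a G-networked sample Z = (z_0,...,z_(n-1)): independent vertex
  features phi(j,v) ~ rho_j, then conditionally independent labels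
  y_i ~ rho_{y|x}(. | x_i) given the features.\<close>
definition networked_sample_dist ::
  "nat \<Rightarrow> nat \<Rightarrow> (nat \<Rightarrow> 'v set) \<Rightarrow> (nat \<Rightarrow> nat \<Rightarrow> 'v) \<Rightarrow> (nat \<Rightarrow> 'x::topological_space measure)
     \<Rightarrow> ((nat \<Rightarrow> 'x) \<Rightarrow> real measure) \<Rightarrow> (nat \<Rightarrow> (nat \<Rightarrow> 'x) \<times> real) measure" where
  "networked_sample_dist k n V E \<rho> K =
     PiM (SIGMA j:{..<k}. V j) (\<lambda>p. \<rho> (fst p)) \<bind>
       (\<lambda>\<phi>. PiM {..<n} (\<lambda>i. distr (K (edge_features k E \<phi> i)) (Zspace k)
                                (\<lambda>y. (edge_features k E \<phi> i, y))))"

definition weighted_emp_mean ::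
  "nat \<Rightarrow> (nat \<Rightarrow> real) \<Rightarrow> real \<Rightarrow> ('z \<Rightarrow> real) \<Rightarrow> (nat \<Rightarrow> 'z) \<Rightarrow> real" where
  "weighted_emp_mean n w s g Z = (1 / s) * (\<Sum>i<n. w i * g (Z i))"

text \<open>Covering number N(G, tau): minimal number of closed sup-norm balls (over the set Zs)
  of radius tau, centred in G, covering G; infinity if no finite cover exists.\<close>
definition covering_number :: "'z set \<Rightarrow> ('z \<Rightarrow> real) set \<Rightarrow> real \<Rightarrow> ennreal" where
  "covering_number Zs \<G> \<tau> =
     Inf {ennreal (real (card C)) | C. finite C \<and> C \<subseteq> \<G> \<and>
            (\<forall>g\<in>\<G>. \<exists>h\<in>C. \<forall>z\<in>Zs. \<bar>g z - h z\<bar> \<le> \<tau>)}"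

end

theory Submission
  imports Defs "HOL-Probability.Probability"
begin


lemma wamgm:
  fixes y w :: "'i \<Rightarrow> real"
  assumes "finite I" "\<And>i. i \<in> I \<Longrightarrow> 0 < y i" "\<And>i. i \<in> I \<Longrightarrow> 0 \<le> w i"
    "(\<Sum>i\<in>I. w i) \<le> 1"
  shows "(\<Prod>i\<in>I. y i powr w i) \<le> (\<Sum>i\<in>I. w i * y i) + (1 - (\<Sum>i\<in>I. w i))"
proof -
  define S where "S = insert None (Some ` I)"
  define a where "a = (\<lambda>q. case q of None \<Rightarrow> 1 - (\<Sum>i\<in>I. w i) | Some i \<Rightarrow> w i)"
  define z where "z = (\<lambda>q. case q of None \<Rightarrow> 0 | Some i \<Rightarrow> ln (y i))"
  have fin: "finite S" using assms(1) by (simp add: S_def)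
  have nN: "None \<notin> Some ` I" by auto
  have sumS: "(\<Sum>q\<in>S. g q) = g None + (\<Sum>i\<in>I. g (Some i))" for g :: "'i option \<Rightarrow> real"
    unfolding S_def using assms(1) nN by (simp add: sum.reindex)
  have "exp (\<Sum>q\<in>S. a q *\<^sub>R z q) \<le> (\<Sum>q\<in>S. a q * exp (z q))"
  proof (rule convex_on_sum[OF fin _ exp_convex])
    show "S \<noteq> {}" by (simp add: S_def)
    show "(\<Sum>q\<in>S. a q) = 1" by (simp add: sumS a_def)
    show "0 \<le> a q" if "q \<in> S" for q using that assms(3,4) by (auto simp: S_def a_def)
  qed auto
  also have "(\<Sum>q\<in>S. a q * exp (z q)) = (\<Sum>i\<in>I. w i * y i) + (1 - (\<Sum>i\<in>I. w i))"
    using assms by (simp add: sumS a_def z_def)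
  also have "exp (\<Sum>q\<in>S. a q *\<^sub>R z q) = (\<Prod>i\<in>I. y i powr w i)"
    using assms by (auto simp: sumS a_def z_def exp_sum powr_def intro!: prod.cong dest: less_imp_neq[OF assms(2)])
  finally show ?thesis .
qed

lemma holder_prod:
  fixes f :: "'i \<Rightarrow> 'a \<Rightarrow> real"
  assumes M: "prob_space M" and fin: "finite I"
    and meas: "\<And>i. i \<in> I \<Longrightarrow> f i \<in> borel_measurable M"
    and bnd: "\<And>i x. i \<in> I \<Longrightarrow> x \<in> space M \<Longrightarrow> a \<le> f i x \<and> f i x \<le> b"
    and a: "0 < a"
    and w: "\<And>i. i \<in> I \<Longrightarrow> 0 \<le> w i" "(\<Sum>i\<in>I. w i) \<le> 1"
  shows "(\<integral>x. (\<Prod>i\<in>I. f i x powr w i) \<partial>M) \<le> (\<Prod>i\<in>I. (\<integral>x. f i x \<partial>M) powr w i)"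
proof -
  interpret prob_space M by fact
  have int: "integrable M (f i)" if "i \<in> I" for i
  proof (rule integrable_const_bound[where B=b])
    show "AE x in M. norm (f i x) \<le> b"
      using bnd[OF that] a by (force intro!: AE_I2 simp: abs_le_iff)
  qed (use meas[OF that] in auto)
  define c where "c i = (\<integral>x. f i x \<partial>M)" for i
  have cge: "a \<le> c i" if "i \<in> I" for i
  proof -
    have "(\<integral>x. a \<partial>M) \<le> c i" unfolding c_def
      by (rule integral_mono_AE) (use int[OF that] bnd[OF that] in auto)
    then show ?thesis by (simp add: prob_space)
  qed
  have cpos: "0 < c i" if "i \<in> I" for i using cge[OF that] a by simp
  have pw: "(\<Prod>i\<in>I. f i x powr w i) = (\<Prod>i\<in>I. c i powr w i) * (\<Prod>i\<in>I. (f i x / c i) powr w i)"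
    if x: "x \<in> space M" for x
  proof -
    have "(\<Prod>i\<in>I. f i x powr w i) = (\<Prod>i\<in>I. c i powr w i * (f i x / c i) powr w i)"
      apply (rule prod.cong[OF refl])
      using cpos bnd[OF _ x] a by (fastforce simp: powr_divide)
    then show ?thesis by (simp add: prod.distrib)
  qed
  have pw2: "(\<Prod>i\<in>I. (f i x / c i) powr w i) \<le> (\<Sum>i\<in>I. w i * (f i x / c i)) + (1 - (\<Sum>i\<in>I. w i))"
    if x: "x \<in> space M" for x
    apply (rule wamgm[OF fin _ w])
  proof -
    fix i assume i: "i \<in> I"
    then have "0 < f i x" using bnd[OF i x] a by linarith
    then show "0 < f i x / c i" using cpos[OF i] by simp
  qed
  have CP: "0 \<le> (\<Prod>i\<in>I. c i powr w i)" by (simp add: prod_nonneg)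
  have intR: "integrable M (\<lambda>x. (\<Sum>i\<in>I. w i * (f i x / c i)) + (1 - (\<Sum>i\<in>I. w i)))"
    using int by (auto intro!: Bochner_Integration.integrable_add integrable_sum integrable_mult_right integrable_divide)
  have measL: "(\<lambda>x. \<Prod>i\<in>I. (f i x / c i) powr w i) \<in> borel_measurable M"
    using meas by measurable
  have intL: "integrable M (\<lambda>x. \<Prod>i\<in>I. (f i x / c i) powr w i)"
  proof (rule Bochner_Integration.integrable_bound[OF intR])
    show "(\<lambda>x. \<Prod>i\<in>I. (f i x / c i) powr w i) \<in> borel_measurable M" by fact
    show "AE x in M. norm (\<Prod>i\<in>I. (f i x / c i) powr w i)
         \<le> norm ((\<Sum>i\<in>I. w i * (f i x / c i)) + (1 - (\<Sum>i\<in>I. w i)))"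
    proof (rule AE_I2)
      fix x assume x: "x \<in> space M"
      have "0 \<le> (\<Prod>i\<in>I. (f i x / c i) powr w i)" by (simp add: prod_nonneg)
      then show "norm (\<Prod>i\<in>I. (f i x / c i) powr w i)
         \<le> norm ((\<Sum>i\<in>I. w i * (f i x / c i)) + (1 - (\<Sum>i\<in>I. w i)))"
        using pw2[OF x] by simp
    qed
  qed
  have "(\<integral>x. (\<Prod>i\<in>I. f i x powr w i) \<partial>M) = (\<integral>x. (\<Prod>i\<in>I. c i powr w i) * (\<Prod>i\<in>I. (f i x / c i) powr w i) \<partial>M)"
    by (rule Bochner_Integration.integral_cong[OF refl pw])
  also have "\<dots> = (\<Prod>i\<in>I. c i powr w i) * (\<integral>x. (\<Prod>i\<in>I. (f i x / c i) powr w i) \<partial>M)"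
    by simp
  also have "\<dots> \<le> (\<Prod>i\<in>I. c i powr w i) * (\<integral>x. (\<Sum>i\<in>I. w i * (f i x / c i)) + (1 - (\<Sum>i\<in>I. w i)) \<partial>M)"
    apply (rule mult_left_mono[OF _ CP])
    apply (rule integral_mono[OF intL intR])
    using pw2 by auto
  also have "(\<integral>x. (\<Sum>i\<in>I. w i * (f i x / c i)) + (1 - (\<Sum>i\<in>I. w i)) \<partial>M) = 1"
  proof -
    have "(\<integral>x. (\<Sum>i\<in>I. w i * (f i x / c i)) + (1 - (\<Sum>i\<in>I. w i)) \<partial>M)
        = (\<Sum>i\<in>I. w i * (c i / c i)) + (1 - (\<Sum>i\<in>I. w i))"
    proof -
      have i1: "integrable M (\<lambda>x. \<Sum>i\<in>I. w i * (f i x / c i))"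
        using int by (auto intro!: integrable_sum integrable_mult_right integrable_divide)
      have "(\<integral>x. (\<Sum>i\<in>I. w i * (f i x / c i)) + (1 - (\<Sum>i\<in>I. w i)) \<partial>M)
          = (\<integral>x. (\<Sum>i\<in>I. w i * (f i x / c i)) \<partial>M) + (1 - (\<Sum>i\<in>I. w i))"
        using i1 by (subst Bochner_Integration.integral_add) (auto simp: prob_space)
      also have "(\<integral>x. (\<Sum>i\<in>I. w i * (f i x / c i)) \<partial>M) = (\<Sum>i\<in>I. w i * (c i / c i))"
        using int by (subst Bochner_Integration.integral_sum) (auto simp: c_def intro!: integrable_mult_right integrable_divide sum.cong)
      finally show ?thesis .
    qed
    also have "\<dots> = 1" using cpos by (simp add: less_imp_neq[symmetric] cong: sum.cong)
    finally show ?thesis .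
  qed
  finally show ?thesis by (simp add: c_def)
qed



lemma int_bounds:
  fixes g :: "'a \<Rightarrow> real"
  assumes "prob_space M" "g \<in> borel_measurable M" "\<And>y. y \<in> space M \<Longrightarrow> a \<le> g y \<and> g y \<le> b"
  shows "a \<le> (\<integral>y. g y \<partial>M) \<and> (\<integral>y. g y \<partial>M) \<le> b" "integrable M g"
proof -
  interpret prob_space M by fact
  show int: "integrable M g"
  proof (rule integrable_const_bound[where B="max \<bar>a\<bar> \<bar>b\<bar>"])
    show "AE x in M. norm (g x) \<le> max \<bar>a\<bar> \<bar>b\<bar>"
      using assms(3) by (intro AE_I2) (force simp: abs_le_iff)
  qed (use assms(2) in auto)
  have "(\<integral>y. a \<partial>M) \<le> (\<integral>y. g y \<partial>M)"
    by (rule integral_mono_AE) (use int assms(3) in auto)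
  moreover have "(\<integral>y. g y \<partial>M) \<le> (\<integral>y. b \<partial>M)"
    by (rule integral_mono_AE) (use int assms(3) in auto)
  ultimately show "a \<le> (\<integral>y. g y \<partial>M) \<and> (\<integral>y. g y \<partial>M) \<le> b" by (simp add: prob_space)
qed

lemma meas_upd:
  "u \<notin> T \<Longrightarrow> (\<lambda>(x,y). x(u:=y)) \<in> measurable (PiM T M \<Otimes>\<^sub>M M u) (PiM (insert u T) M)"
  using measurable_fun_upd[where J=T and I="insert u T" and i=u and M=M and N="PiM T M \<Otimes>\<^sub>M M u"
      and f=fst and h=snd] by (simp add: case_prod_beta')

lemma prod_powr_bounds:
  fixes f :: "'i \<Rightarrow> real"
  assumes "finite I" "\<And>i. i \<in> I \<Longrightarrow> a \<le> f i \<and> f i \<le> b" "0 < a" "\<And>i. i \<in> I \<Longrightarrow> 0 \<le> w i"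
  shows "0 \<le> (\<Prod>i\<in>I. f i powr w i) \<and> (\<Prod>i\<in>I. f i powr w i) \<le> (\<Prod>i\<in>I. b powr w i)"
proof
  show "0 \<le> (\<Prod>i\<in>I. f i powr w i)" by (simp add: prod_nonneg)
  show "(\<Prod>i\<in>I. f i powr w i) \<le> (\<Prod>i\<in>I. b powr w i)"
  proof (rule prod_mono)
    fix i assume i: "i \<in> I"
    have "0 < f i" using assms(2)[OF i] assms(3) by linarith
    then show "0 \<le> f i powr w i \<and> f i powr w i \<le> b powr w i"
      using assms(2)[OF i] assms(4)[OF i] by (auto intro: powr_mono2)
  qed
qed

lemma finner:
  fixes M :: "'v \<Rightarrow> 'a measure" and f :: "'e \<Rightarrow> ('v \<Rightarrow> 'a) \<Rightarrow> real"
  assumes S: "finite S" and I: "finite I" and M: "\<And>v. prob_space (M v)"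
    and meas: "\<And>i. i \<in> I \<Longrightarrow> f i \<in> borel_measurable (PiM S M)"
    and bnd: "\<And>i x. i \<in> I \<Longrightarrow> x \<in> space (PiM S M) \<Longrightarrow> a \<le> f i x \<and> f i x \<le> b"
    and a: "0 < a"
    and dep: "\<And>i x y. i \<in> I \<Longrightarrow> (\<And>v. v \<in> e i \<Longrightarrow> x v = y v) \<Longrightarrow> f i x = f i y"
    and w: "\<And>i. i \<in> I \<Longrightarrow> 0 \<le> w i"
    and wv: "\<And>v. v \<in> S \<Longrightarrow> (\<Sum>i\<in>{i\<in>I. v \<in> e i}. w i) \<le> 1"
  shows "(\<integral>x. (\<Prod>i\<in>I. f i x powr w i) \<partial>PiM S M) \<le> (\<Prod>i\<in>I. (\<integral>x. f i x \<partial>PiM S M) powr w i)"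
  using S meas bnd dep wv
proof (induction S arbitrary: f e rule: finite_induct)
  case empty
  have sp: "space (PiM {} M) = {\<lambda>_. undefined}" by (simp add: PiM_empty)
  have *: "(\<integral>x. g x \<partial>PiM {} M) = g (\<lambda>_. undefined)" for g :: "('v \<Rightarrow> 'a) \<Rightarrow> real"
    by (simp add: PiM_empty lebesgue_integral_count_space_finite)
  show ?case by (simp add: *)
next
  case (insert u T)
  interpret pps: product_prob_space M T by (intro product_prob_spaceI M)
  let ?P = "PiM (insert u T) M" and ?Q = "PiM T M"
  have probQ: "prob_space ?Q" by (rule prob_space_PiM) (use M insert.hyps in auto)
  have probP: "prob_space ?P" by (rule prob_space_PiM) (use M insert.hyps in auto)
  note fmeas = insert.prems(1) and fbnd = insert.prems(2) and fdep = insert.prems(3)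
  define F where "F x = (\<Prod>i\<in>I. f i x powr w i)" for x
  have Fmeas: "F \<in> borel_measurable ?P" unfolding F_def using fmeas by measurable
  have Fbnd: "0 \<le> F x \<and> F x \<le> (\<Prod>i\<in>I. b powr w i)" if "x \<in> space ?P" for x
    unfolding F_def by (rule prod_powr_bounds[OF I _ a w]) (use fbnd that in auto)
  have Fint: "integrable ?P F" using int_bounds(2)[OF probP Fmeas Fbnd] .
  have updsp: "x(u:=y) \<in> space ?P" if "x \<in> space ?Q" "y \<in> space (M u)" for x y
    using measurable_space[OF measurable_component_update[OF that(1) insert.hyps(2)] that(2)] .
  have updmeas: "(\<lambda>(x,y). g (x(u:=y))) \<in> borel_measurable (?Q \<Otimes>\<^sub>M M u)"
    if "g \<in> borel_measurable ?P" for g :: "_ \<Rightarrow> real"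
    using measurable_comp[OF meas_upd[OF insert.hyps(2)] that] by (simp add: comp_def case_prod_beta')
  define f' where "f' i x = (\<integral>y. f i (x(u:=y)) \<partial>M u)" for i x
  define e' where "e' i = e i - {u}" for i
  have f'meas: "f' i \<in> borel_measurable ?Q" if "i \<in> I" for i
    unfolding f'_def
    by (rule sigma_finite_measure.borel_measurable_lebesgue_integral[OF prob_space_imp_sigma_finite[OF M] updmeas[OF fmeas[OF that]]])
  have ymeas: "(\<lambda>y. g (x(u:=y))) \<in> borel_measurable (M u)"
    if "g \<in> borel_measurable ?P" "x \<in> space ?Q" for g :: "_ \<Rightarrow> real" and x
    using measurable_comp[OF measurable_component_update[OF that(2) insert.hyps(2)] that(1)]
    by (simp add: comp_def)
  have f'bnd: "a \<le> f' i x \<and> f' i x \<le> b" if "i \<in> I" "x \<in> space ?Q" for i x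
    unfolding f'_def
    by (rule int_bounds(1)[OF M ymeas[OF fmeas[OF that(1)] that(2)]])
       (use fbnd[OF that(1) updsp[OF that(2)]] in auto)
  have f'dep: "f' i x = f' i y" if "i \<in> I" "\<And>v. v \<in> e' i \<Longrightarrow> x v = y v" for i x y
    unfolding f'_def
    by (rule Bochner_Integration.integral_cong[OF refl], rule fdep[OF that(1)])
       (use that(2) in \<open>auto simp: e'_def\<close>)
  have f'const: "f' i x = f i x" if "i \<in> I" "u \<notin> e i" for i x
  proof -
    have "f' i x = (\<integral>y. f i x \<partial>M u)" unfolding f'_def
      by (rule Bochner_Integration.integral_cong[OF refl], rule fdep[OF that(1)]) (use that in auto)
    then show ?thesis using prob_space.prob_space[OF M] by simp
  qed
  define Iu where "Iu = {i\<in>I. u \<in> e i}"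
  have IuI: "Iu \<subseteq> I" and finIu: "finite Iu" using I by (auto simp: Iu_def)
  have inner: "(\<integral>y. F (x(u:=y)) \<partial>M u) \<le> (\<Prod>i\<in>I. f' i x powr w i)" if x: "x \<in> space ?Q" for x
  proof -
    define c where "c = (\<Prod>i\<in>I - Iu. f i x powr w i)"
    have split: "F (x(u:=y)) = c * (\<Prod>i\<in>Iu. f i (x(u:=y)) powr w i)" for y
    proof -
      have "F (x(u:=y)) = (\<Prod>i\<in>I - Iu. f i (x(u:=y)) powr w i) * (\<Prod>i\<in>Iu. f i (x(u:=y)) powr w i)"
        unfolding F_def using prod.subset_diff[OF IuI I, of "\<lambda>i. f i (x(u:=y)) powr w i"] by simp
      also have "(\<Prod>i\<in>I - Iu. f i (x(u:=y)) powr w i) = c"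
        unfolding c_def
      proof (rule prod.cong[OF refl])
        fix i assume i: "i \<in> I - Iu"
        have "f i (x(u:=y)) = f i x" by (rule fdep) (use i in \<open>auto simp: Iu_def\<close>)
        then show "f i (x(u:=y)) powr w i = f i x powr w i" by simp
      qed
      finally show ?thesis .
    qed
    have c0: "0 \<le> c" unfolding c_def by (simp add: prod_nonneg)
    have hol: "(\<integral>y. (\<Prod>i\<in>Iu. f i (x(u:=y)) powr w i) \<partial>M u) \<le> (\<Prod>i\<in>Iu. f' i x powr w i)"
      unfolding f'_def
    proof (rule holder_prod[OF M finIu, where a=a and b=b])
      show "(\<lambda>y. f i (x(u:=y))) \<in> borel_measurable (M u)" if "i \<in> Iu" for i
        by (rule ymeas[OF fmeas x]) (use that IuI in auto)
      show "a \<le> f i (x(u:=y)) \<and> f i (x(u:=y)) \<le> b" if "i \<in> Iu" "y \<in> space (M u)" for i y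
        by (rule fbnd[OF _ updsp[OF x that(2)]]) (use that IuI in auto)
      show "0 \<le> w i" if "i \<in> Iu" for i using w that IuI by auto
      show "(\<Sum>i\<in>Iu. w i) \<le> 1" unfolding Iu_def using insert.prems(4)[of u] by simp
    qed (use a in auto)
    have "(\<integral>y. F (x(u:=y)) \<partial>M u) = c * (\<integral>y. (\<Prod>i\<in>Iu. f i (x(u:=y)) powr w i) \<partial>M u)"
      by (simp add: split)
    also have "\<dots> \<le> c * (\<Prod>i\<in>Iu. f' i x powr w i)" by (rule mult_left_mono[OF hol c0])
    also have "c = (\<Prod>i\<in>I - Iu. f' i x powr w i)"
      unfolding c_def by (rule prod.cong[OF refl]) (auto simp: Iu_def f'const)
    also have "(\<Prod>i\<in>I - Iu. f' i x powr w i) * (\<Prod>i\<in>Iu. f' i x powr w i) = (\<Prod>i\<in>I. f' i x powr w i)"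
      using prod.subset_diff[OF IuI I, of "\<lambda>i. f' i x powr w i"] by simp
    finally show ?thesis .
  qed
  have IH: "(\<integral>x. (\<Prod>i\<in>I. f' i x powr w i) \<partial>?Q) \<le> (\<Prod>i\<in>I. (\<integral>x. f' i x \<partial>?Q) powr w i)"
  proof (rule insert.IH[where e=e'])
    show "f' i \<in> borel_measurable ?Q" if "i \<in> I" for i using f'meas that .
    show "a \<le> f' i x \<and> f' i x \<le> b" if "i \<in> I" "x \<in> space ?Q" for i x using f'bnd that .
    show "f' i x = f' i y" if "i \<in> I" "\<And>v. v \<in> e' i \<Longrightarrow> x v = y v" for i x y using f'dep that .
    show "(\<Sum>i\<in>{i\<in>I. v \<in> e' i}. w i) \<le> 1" if "v \<in> T" for v
    proof -
      have "{i\<in>I. v \<in> e' i} = {i\<in>I. v \<in> e i}" using that insert.hyps(2) by (auto simp: e'_def)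
      then show ?thesis using insert.prems(4)[of v] that by simp
    qed
  qed
  have measY: "(\<lambda>x. \<integral>y. F (x(u:=y)) \<partial>M u) \<in> borel_measurable ?Q"
    by (rule sigma_finite_measure.borel_measurable_lebesgue_integral[OF prob_space_imp_sigma_finite[OF M] updmeas[OF Fmeas]])
  have bndY: "0 \<le> (\<integral>y. F (x(u:=y)) \<partial>M u) \<and> (\<integral>y. F (x(u:=y)) \<partial>M u) \<le> (\<Prod>i\<in>I. b powr w i)"
    if "x \<in> space ?Q" for x
    by (rule int_bounds(1)[OF M ymeas[OF Fmeas that]]) (use Fbnd updsp[OF that] in auto)
  have measF': "(\<lambda>x. \<Prod>i\<in>I. f' i x powr w i) \<in> borel_measurable ?Q"
    using f'meas by measurable
  have bndF': "0 \<le> (\<Prod>i\<in>I. f' i x powr w i) \<and> (\<Prod>i\<in>I. f' i x powr w i) \<le> (\<Prod>i\<in>I. b powr w i)"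
    if "x \<in> space ?Q" for x
    by (rule prod_powr_bounds[OF I _ a w]) (use f'bnd that in auto)
  have "(\<integral>x. F x \<partial>?P) = (\<integral>x. (\<integral>y. F (x(u:=y)) \<partial>M u) \<partial>?Q)"
    by (rule pps.product_integral_insert[OF insert.hyps(1,2) Fint])
  also have "\<dots> \<le> (\<integral>x. (\<Prod>i\<in>I. f' i x powr w i) \<partial>?Q)"
    by (rule integral_mono[OF int_bounds(2)[OF probQ measY bndY] int_bounds(2)[OF probQ measF' bndF'] inner])
  also have "\<dots> \<le> (\<Prod>i\<in>I. (\<integral>x. f' i x \<partial>?Q) powr w i)" by (rule IH)
  also have "\<dots> = (\<Prod>i\<in>I. (\<integral>x. f i x \<partial>?P) powr w i)"
  proof (rule prod.cong[OF refl])
    fix i assume i: "i \<in> I"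
    have "(\<integral>x. f i x \<partial>?P) = (\<integral>x. f' i x \<partial>?Q)" unfolding f'_def
      by (rule pps.product_integral_insert[OF insert.hyps(1,2) int_bounds(2)[OF probP fmeas[OF i] fbnd[OF i]]])
    then show "(\<integral>x. f' i x \<partial>?Q) powr w i = (\<integral>x. f i x \<partial>?P) powr w i" by simp
  qed
  finally show ?case unfolding F_def .
qed



lemma exp_le_quad_nonpos:
  fixes u :: real assumes "u \<le> 0" shows "exp u \<le> 1 + u + u\<^sup>2 / 2"
proof -
  define g where "g t = 1 + t + t\<^sup>2/2 - exp t" for t :: real
  have d: "(g has_real_derivative (1 + t - exp t)) (at t)" for t
    unfolding g_def by (auto intro!: derivative_eq_intros simp: power2_eq_square)
  have "g 0 \<le> g u"
    by (rule DERIV_nonpos_imp_nonincreasing[OF assms])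
       (use d exp_ge_add_one_self in \<open>fastforce simp: algebra_simps\<close>)
  then show ?thesis by (simp add: g_def)
qed

lemma exp_le_bern:
  fixes u L :: real assumes "u \<le> L" "0 \<le> L" "L < 3"
  shows "exp u \<le> 1 + u + u\<^sup>2 / (2 * (1 - L / 3))"
proof (cases "u \<le> 0")
  case True
  have "u\<^sup>2 / 2 \<le> u\<^sup>2 / (2 * (1 - L / 3))"
    using assms by (intro divide_left_mono) (auto simp: field_simps)
  then show ?thesis using exp_le_quad_nonpos[OF True] by linarith
next
  case False
  then have x0: "0 \<le> u" and x3: "u < 3" using assms by auto
  have sumsx: "(\<lambda>n. u\<^sup>2 / 2 * (u/3) ^ n) sums (u\<^sup>2 / 2 * (1 / (1 - u/3)))"
    by (intro sums_mult geometric_sums) (use x0 x3 in auto)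
  have le: "suminf (\<lambda>n. inverse(fact (n+2)) * (u ^ (n + 2))) \<le> suminf (\<lambda>n. (u\<^sup>2/2) * ((u/3)^n))"
  proof (intro suminf_le allI)
    show "inverse (fact (n + 2)) * u ^ (n + 2) \<le> (u\<^sup>2/2) * ((u/3)^n)" for n :: nat
    proof -
      have "(2::nat) * 3 ^ n \<le> fact (n + 2)"
      proof (induct n)
        case (Suc n)
        have "fact (Suc n + 2) = (n + 3) * fact (n + 2)" by (simp add: algebra_simps)
        then show ?case using Suc by simp
      qed simp
      then have "real ((2::nat) * 3 ^ n) \<le> real_of_nat (fact (n + 2))"
        by (simp only: of_nat_le_iff)
      then have f: "((2::real) * 3 ^ n) \<le> fact (n + 2)"
        unfolding of_nat_fact by simp
      have "inverse (fact (n + 2)) * u ^ (n + 2) = u\<^sup>2 * u ^ n / fact (n+2)"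
        by (simp add: power_add divide_inverse algebra_simps power2_eq_square)
      also have "\<dots> \<le> u\<^sup>2 * u ^ n / (2 * 3 ^ n)"
        by (rule divide_left_mono[OF f]) (use x0 in auto)
      also have "\<dots> = (u\<^sup>2/2) * ((u/3)^n)" by (simp add: power_divide)
      finally show ?thesis .
    qed
    show "summable (\<lambda>n. inverse (fact (n + 2)) * u ^ (n + 2))"
      by (rule summable_exp [THEN summable_ignore_initial_segment])
    show "summable (\<lambda>n. u\<^sup>2 / 2 * (u/3) ^ n)"
      by (rule sums_summable [OF sumsx])
  qed
  have "exp u \<le> 1 + u + u\<^sup>2 / 2 * (1 / (1 - u/3))"
    using le sums_unique[OF sumsx] unfolding exp_first_two_terms by auto
  also have "u\<^sup>2 / 2 * (1 / (1 - u/3)) \<le> u\<^sup>2 / (2 * (1 - L / 3))"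
    using x0 x3 assms by (auto simp: field_simps intro!: mult_right_mono)
  finally show ?thesis by simp
qed

lemma mgf_bern:
  fixes Y :: "'a \<Rightarrow> real"
  assumes M: "prob_space M" and Ym: "Y \<in> borel_measurable M"
    and Yb: "\<And>x. x \<in> space M \<Longrightarrow> \<bar>Y x\<bar> \<le> B"
    and E0: "(\<integral>x. Y x \<partial>M) = 0" and V: "(\<integral>x. (Y x)\<^sup>2 \<partial>M) \<le> V"
    and l: "0 \<le> l" "l * B < 3"
  shows "(\<integral>x. exp (l * Y x) \<partial>M) \<le> exp (l\<^sup>2 * V / (2 * (1 - l * B / 3)))"
proof -
  interpret prob_space M by fact
  have B0: "0 \<le> B" using Yb[OF some_in_eq[THEN iffD2, OF not_empty]] by linarith
  have LB: "0 \<le> l * B" using l B0 by simp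
  define D where "D = 2 * (1 - l * B / 3)"
  have D0: "0 < D" using l(2) by (simp add: D_def mult.commute)
  have intY: "integrable M Y"
    by (rule integrable_const_bound[where B=B]) (use Yb Ym in auto)
  have intY2: "integrable M (\<lambda>x. (Y x)\<^sup>2)"
    by (rule integrable_const_bound[where B="B\<^sup>2"])
       (use Yb Ym in \<open>force intro!: AE_I2 simp: abs_le_square_iff[symmetric] power_mono\<close>)+
  have intR: "integrable M (\<lambda>x. 1 + l * Y x + (l * Y x)\<^sup>2 / D)"
    using intY intY2 by (auto simp: power_mult_distrib intro!: Bochner_Integration.integrable_add integrable_divide integrable_mult_right)
  have intE: "integrable M (\<lambda>x. exp (l * Y x))"
  proof (rule integrable_const_bound[where B="exp (l * B)"])
    show "AE x in M. norm (exp (l * Y x)) \<le> exp (l * B)"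
      using Yb l by (intro AE_I2) (auto intro!: mult_left_mono simp: abs_le_iff)
  qed (use Ym in auto)
  have pw: "exp (l * Y x) \<le> 1 + l * Y x + (l * Y x)\<^sup>2 / D" if "x \<in> space M" for x
    unfolding D_def
    by (rule exp_le_bern[OF _ LB l(2)]) (use Yb[OF that] l in \<open>auto intro!: mult_left_mono simp: abs_le_iff\<close>)
  have "(\<integral>x. exp (l * Y x) \<partial>M) \<le> (\<integral>x. 1 + l * Y x + (l * Y x)\<^sup>2 / D \<partial>M)"
    by (rule integral_mono[OF intE intR pw])
  also have "(\<integral>x. 1 + l * Y x + (l * Y x)\<^sup>2 / D \<partial>M) = 1 + l * (\<integral>x. Y x \<partial>M) + l\<^sup>2 * (\<integral>x. (Y x)\<^sup>2 \<partial>M) / D"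
    using intY intY2
    by (simp add: power_mult_distrib Bochner_Integration.integral_add integrable_divide prob_space)
  also have "\<dots> \<le> 1 + l\<^sup>2 * V / D"
    using E0 V D0 by (auto intro!: divide_right_mono mult_left_mono)
  also have "\<dots> \<le> exp (l\<^sup>2 * V / D)" using exp_ge_add_one_self[of "l\<^sup>2 * V / D"] by simp
  finally show ?thesis by (simp add: D_def)
qed



definition fillM :: "'i set \<Rightarrow> ('i \<Rightarrow> 'a measure) \<Rightarrow> 'i \<Rightarrow> 'a measure" where
  "fillM I M = (\<lambda>i. if i \<in> I then M i else count_space {undefined})"

lemma PiM_fill: "PiM I M = PiM I (fillM I M)"
  unfolding fillM_def by (rule PiM_cong) auto

lemma prob_fill: "(\<And>i. i \<in> I \<Longrightarrow> prob_space (M i)) \<Longrightarrow> prob_space (fillM I M v)"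
  unfolding fillM_def by (auto intro: prob_spaceI)

lemma pps_fill: "(\<And>i. i \<in> I \<Longrightarrow> prob_space (M i)) \<Longrightarrow> product_prob_space (fillM I M)"
  by (intro product_prob_spaceI prob_fill)

lemma nn_integral_PiM_prod_fin:
  fixes f :: "'i \<Rightarrow> 'a \<Rightarrow> ennreal"
  assumes "finite I" "\<And>i. i \<in> I \<Longrightarrow> prob_space (M i)" "\<And>i. i \<in> I \<Longrightarrow> f i \<in> borel_measurable (M i)"
  shows "(\<integral>\<^sup>+x. (\<Prod>i\<in>I. f i (x i)) \<partial>PiM I M) = (\<Prod>i\<in>I. integral\<^sup>N (M i) (f i))"
proof -
  interpret product_prob_space "fillM I M" I by (rule pps_fill) fact
  have "(\<integral>\<^sup>+x. (\<Prod>i\<in>I. f i (x i)) \<partial>PiM I (fillM I M)) = (\<Prod>i\<in>I. integral\<^sup>N (fillM I M i) (f i))"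
    by (rule product_nn_integral_prod) (use assms in \<open>auto simp: fillM_def\<close>)
  also have "(\<Prod>i\<in>I. integral\<^sup>N (fillM I M i) (f i)) = (\<Prod>i\<in>I. integral\<^sup>N (M i) (f i))"
    by (rule prod.cong) (auto simp: fillM_def)
  finally show ?thesis by (simp only: PiM_fill[of I M, symmetric])
qed

lemma finner_fin:
  fixes M :: "'v \<Rightarrow> 'a measure" and f :: "'e \<Rightarrow> ('v \<Rightarrow> 'a) \<Rightarrow> real"
  assumes S: "finite S" and I: "finite I" and M: "\<And>v. v \<in> S \<Longrightarrow> prob_space (M v)"
    and meas: "\<And>i. i \<in> I \<Longrightarrow> f i \<in> borel_measurable (PiM S M)"
    and bnd: "\<And>i x. i \<in> I \<Longrightarrow> x \<in> space (PiM S M) \<Longrightarrow> a \<le> f i x \<and> f i x \<le> b"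
    and a: "0 < a"
    and dep: "\<And>i x y. i \<in> I \<Longrightarrow> (\<And>v. v \<in> e i \<Longrightarrow> x v = y v) \<Longrightarrow> f i x = f i y"
    and w: "\<And>i. i \<in> I \<Longrightarrow> 0 \<le> w i"
    and wv: "\<And>v. v \<in> S \<Longrightarrow> (\<Sum>i\<in>{i\<in>I. v \<in> e i}. w i) \<le> 1"
  shows "(\<integral>x. (\<Prod>i\<in>I. f i x powr w i) \<partial>PiM S M) \<le> (\<Prod>i\<in>I. (\<integral>x. f i x \<partial>PiM S M) powr w i)"
proof -
  have "(\<integral>x. (\<Prod>i\<in>I. f i x powr w i) \<partial>PiM S (fillM S M)) \<le> (\<Prod>i\<in>I. (\<integral>x. f i x \<partial>PiM S (fillM S M)) powr w i)"
    by (rule finner[OF S I prob_fill[OF M] meas[unfolded PiM_fill[of S M]] bnd[unfolded PiM_fill[of S M]] a dep w wv])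
  then show ?thesis by (simp only: PiM_fill[of S M, symmetric])
qed

definition Dk :: "nat \<Rightarrow> ((nat \<Rightarrow> 'x::topological_space) \<Rightarrow> real measure) \<Rightarrow> (nat \<Rightarrow> 'x) \<Rightarrow> ((nat \<Rightarrow> 'x) \<times> real) measure" where
  "Dk k K x = distr (K x) (Zspace k) (\<lambda>y. (x, y))"

lemma Dk_meas:
  assumes K: "K \<in> measurable (PiM {..<k} (\<lambda>_. borel)) (prob_algebra borel)"
  shows "Dk k K \<in> measurable (PiM {..<k} (\<lambda>_. borel)) (prob_algebra (Zspace k))"
proof -
  have "(\<lambda>x. distr (K x) (Zspace k) (\<lambda>y. (x, y))) \<in> measurable (PiM {..<k} (\<lambda>_. borel)) (prob_algebra (Zspace k))"
  proof (rule measurable_distr_prob_space2[OF K])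
    show "(\<lambda>(x, y). (x, y)) \<in> PiM {..<k} (\<lambda>_. borel) \<Otimes>\<^sub>M borel \<rightarrow>\<^sub>M Zspace k"
      unfolding Zspace_def by (simp add: case_prod_beta' measurable_ident_sets)
  qed
  then show ?thesis unfolding Dk_def[abs_def] .
qed

lemma Dk_prob:
  assumes K: "K \<in> measurable (PiM {..<k} (\<lambda>_. borel)) (prob_algebra borel)"
    and x: "x \<in> space (PiM {..<k} (\<lambda>_. borel))"
  shows "prob_space (Dk k K x)" "sets (Dk k K x) = sets (Zspace k)"
  using measurable_space[OF Dk_meas[OF K] x] by (auto simp: space_prob_algebra)



locale netsetup =
  fixes k n :: nat and V :: "nat \<Rightarrow> 'v set" and E :: "nat \<Rightarrow> nat \<Rightarrow> 'v"
    and \<rho> :: "nat \<Rightarrow> 'x::metric_space measure" and K :: "(nat \<Rightarrow> 'x) \<Rightarrow> real measure"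
  assumes G: "kpartite_hypergraph k n V E"
    and rho: "\<And>j. j < k \<Longrightarrow> prob_space (\<rho> j)"
    and rho_sets: "\<And>j. j < k \<Longrightarrow> sets (\<rho> j) = sets borel"
    and K: "K \<in> measurable (PiM {..<k} (\<lambda>_. borel)) (prob_algebra borel)"
begin

abbreviation "SS \<equiv> SIGMA j:{..<k}. V j"
abbreviation "Phi \<equiv> PiM SS (\<lambda>p. \<rho> (fst p))"
abbreviation "R0 \<equiv> PiM {..<k} (\<lambda>_. borel :: 'x measure)"
abbreviation "R \<equiv> PiM {..<k} \<rho>"
abbreviation "kern \<equiv> (\<lambda>\<phi>. PiM {..<n} (\<lambda>i. Dk k K (edge_features k E \<phi> i)))"
abbreviation "PP \<equiv> networked_sample_dist k n V E \<rho> K"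
abbreviation "JJ \<equiv> joint_dist k \<rho> K"
abbreviation "ZZ \<equiv> PiM {..<n} (\<lambda>_. Zspace k :: ((nat \<Rightarrow> 'x) \<times> real) measure)"

lemma finS: "finite SS"
  using G unfolding kpartite_hypergraph_def by auto

lemma edge_in: "i < n \<Longrightarrow> j < k \<Longrightarrow> (j, E i j) \<in> SS"
  using G unfolding kpartite_hypergraph_def by auto

lemma k0: "0 < k" using G unfolding kpartite_hypergraph_def by auto

lemma sets_R: "sets R = sets R0"
  by (rule sets_PiM_cong) (auto simp: rho_sets)

lemma space_R: "space R = space R0"
  using sets_R by (rule sets_eq_imp_space_eq)

lemma probR: "prob_space R" by (rule prob_space_PiM) (auto intro: rho)

lemma probPhi: "prob_space Phi" by (rule prob_space_PiM) (auto intro: rho)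

lemma Dk_measR: "Dk k K \<in> measurable R (prob_algebra (Zspace k))"
  by (subst measurable_cong_sets[OF sets_R refl]) (rule Dk_meas[OF K])

lemma ef_meas: "i < n \<Longrightarrow> (\<lambda>\<phi>. edge_features k E \<phi> i) \<in> measurable Phi R0"
  unfolding edge_features_def
proof (rule measurable_restrict)
  fix j assume i: "i < n" and j: "j \<in> {..<k}"
  have "(\<lambda>\<phi>. \<phi> (j, E i j)) \<in> measurable Phi (\<rho> (fst (j, E i j)))"
    by (rule measurable_component_singleton) (use edge_in i j in auto)
  then show "(\<lambda>\<phi>. \<phi> (j, E i j)) \<in> measurable Phi borel"
    using j measurable_cong_sets[OF refl rho_sets, of j Phi] by simp
qed

lemma ef_measR: "i < n \<Longrightarrow> (\<lambda>\<phi>. edge_features k E \<phi> i) \<in> measurable Phi R"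
  by (subst measurable_cong_sets[OF refl sets_R]) (rule ef_meas)

lemma marg: "i < n \<Longrightarrow> distr Phi R (\<lambda>\<phi>. edge_features k E \<phi> i) = R"
proof -
  assume i: "i < n"
  have "distr Phi (\<Pi>\<^sub>M j\<in>{..<k}. \<rho> (fst (j, E i j))) (\<lambda>\<omega>. \<lambda>j\<in>{..<k}. \<omega> (j, E i j)) = (\<Pi>\<^sub>M j\<in>{..<k}. \<rho> (fst (j, E i j)))"
    by (rule distr_PiM_reindex) (use rho edge_in i in \<open>auto simp: inj_on_def\<close>)
  then show ?thesis by (simp add: edge_features_def)
qed

lemma kern_prob: "\<phi> \<in> space Phi \<Longrightarrow> prob_space (kern \<phi>)"
  by (rule prob_space_PiM) (use Dk_prob(1)[OF K] measurable_space[OF ef_meas] in auto)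

lemma Dk_ef_sub: "i < n \<Longrightarrow> (\<lambda>\<phi>. Dk k K (edge_features k E \<phi> i)) \<in> measurable Phi (subprob_algebra (Zspace k))"
  using measurable_comp[OF ef_meas Dk_meas[OF K]] measurable_prob_algebraD by (auto simp: comp_def)

lemma kern_meas: "kern \<in> measurable Phi (prob_algebra ZZ)"
proof (rule measurable_prob_algebra_generated[where \<Omega>="\<Pi>\<^sub>E i\<in>{..<n}. space (Zspace k :: ((nat \<Rightarrow> 'x) \<times> real) measure)" and G="prod_algebra {..<n} (\<lambda>_. Zspace k :: ((nat \<Rightarrow> 'x) \<times> real) measure)"])
  show "sets ZZ = sigma_sets (\<Pi>\<^sub>E i\<in>{..<n}. space (Zspace k)) (prod_algebra {..<n} (\<lambda>_. Zspace k))"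
    by (rule sets_PiM)
  show "Int_stable (prod_algebra {..<n} (\<lambda>_. Zspace k))" by (rule Int_stable_prod_algebra)
  show "prod_algebra {..<n} (\<lambda>_. Zspace k) \<subseteq> Pow (\<Pi>\<^sub>E i\<in>{..<n}. space (Zspace k))"
    using prod_algebra_sets_into_space by blast
  show "prob_space (kern a)" if "a \<in> space Phi" for a using kern_prob that .
  show "sets (kern a) = sets ZZ" if "a \<in> space Phi" for a
    by (rule sets_PiM_cong) (use Dk_prob(2)[OF K] measurable_space[OF ef_meas] that in auto)
  fix A :: "(nat \<Rightarrow> (nat \<Rightarrow> 'x) \<times> real) set" assume A: "A \<in> prod_algebra {..<n} (\<lambda>_. Zspace k)"
  then obtain X where AX: "A = (\<Pi>\<^sub>E i\<in>{..<n}. X i)" and X: "X \<in> (\<Pi> j\<in>{..<n}. sets (Zspace k))"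
    by (auto simp: prod_algebra_eq_finite)
  have eq: "emeasure (kern a) A = (\<Prod>i\<in>{..<n}. emeasure (Dk k K (edge_features k E a i)) (X i))"
    if a: "a \<in> space Phi" for a
  proof -
    have sp: "X i \<subseteq> space (Dk k K (edge_features k E a i))" if "i < n" for i
      using X that sets.sets_into_space Dk_prob(2)[OF K measurable_space[OF ef_meas[OF that] a]]
      sets_eq_imp_space_eq[OF Dk_prob(2)[OF K measurable_space[OF ef_meas[OF that] a]]]
      by (auto simp: Pi_iff)
    have "emeasure (kern a) (prod_emb {..<n} (\<lambda>i. Dk k K (edge_features k E a i)) {..<n} (\<Pi>\<^sub>E i\<in>{..<n}. X i))
        = (\<Prod>i\<in>{..<n}. emeasure (Dk k K (edge_features k E a i)) (X i))"
      by (rule emeasure_PiM_emb)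
         (use X Dk_prob[OF K measurable_space[OF ef_meas a]] in auto)
    moreover have "prod_emb {..<n} (\<lambda>i. Dk k K (edge_features k E a i)) {..<n} (\<Pi>\<^sub>E i\<in>{..<n}. X i) = (\<Pi>\<^sub>E i\<in>{..<n}. X i)"
      by (rule prod_emb_PiE_same_index) (use sp in auto)
    ultimately show ?thesis by (simp add: AX)
  qed
  have "(\<lambda>a. \<Prod>i\<in>{..<n}. emeasure (Dk k K (edge_features k E a i)) (X i)) \<in> borel_measurable Phi"
  proof (rule borel_measurable_prod_ennreal)
    fix i assume i: "i \<in> {..<n}"
    show "(\<lambda>a. emeasure (Dk k K (edge_features k E a i)) (X i)) \<in> borel_measurable Phi"
      using measurable_comp[OF Dk_ef_sub measurable_emeasure_subprob_algebra, of i "X i"] X i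
      by (auto simp: comp_def)
  qed
  then show "(\<lambda>a. emeasure (kern a) A) \<in> borel_measurable Phi"
    by (rule measurable_cong[THEN iffD1, rotated]) (simp add: eq)
qed

lemma PP_eq: "PP = Phi \<bind> kern"
  unfolding networked_sample_dist_def Dk_def ..

lemma JJ_eq: "JJ = R \<bind> Dk k K"
  unfolding joint_dist_def Dk_def[abs_def] ..

lemma Phi_in: "Phi \<in> space (prob_algebra Phi)"
  using probPhi by (simp add: space_prob_algebra)

lemma R_in: "R \<in> space (prob_algebra R)"
  using probR by (simp add: space_prob_algebra)

lemma probPP: "prob_space PP"
  unfolding PP_eq by (rule prob_space_bind'[OF Phi_in kern_meas])

lemma sets_PP: "sets PP = sets ZZ"
  unfolding PP_eq by (rule sets_bind'[OF Phi_in kern_meas])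

lemma probJJ: "prob_space JJ"
  unfolding JJ_eq by (rule prob_space_bind'[OF R_in Dk_measR])

lemma sets_JJ: "sets JJ = sets (Zspace k)"
  unfolding JJ_eq by (rule sets_bind'[OF R_in Dk_measR])

end



context netsetup begin

lemma space_PP: "space PP = space ZZ"
  using sets_PP by (rule sets_eq_imp_space_eq)

lemma space_JJ: "space JJ = space (Zspace k)"
  using sets_JJ by (rule sets_eq_imp_space_eq)

lemma kern_sub: "kern \<in> measurable Phi (subprob_algebra ZZ)"
  using kern_meas by (rule measurable_prob_algebraD)

lemma Dk_sub: "Dk k K \<in> measurable R (subprob_algebra (Zspace k))"
  using Dk_measR by (rule measurable_prob_algebraD)

lemma Dk_ef_sets: "i < n \<Longrightarrow> \<phi> \<in> space Phi \<Longrightarrow> sets (Dk k K (edge_features k E \<phi> i)) = sets (Zspace k)"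
  using Dk_prob(2)[OF K measurable_space[OF ef_meas]] by auto

lemma Dk_ef_prob: "i < n \<Longrightarrow> \<phi> \<in> space Phi \<Longrightarrow> prob_space (Dk k K (edge_features k E \<phi> i))"
  using Dk_prob(1)[OF K measurable_space[OF ef_meas]] by auto

lemma nn_PP_prod:
  fixes F :: "nat \<Rightarrow> (nat \<Rightarrow> 'x) \<times> real \<Rightarrow> ennreal"
  assumes F: "\<And>i. i < n \<Longrightarrow> F i \<in> borel_measurable (Zspace k)"
  shows "(\<integral>\<^sup>+Z. (\<Prod>i<n. F i (Z i)) \<partial>PP) = (\<integral>\<^sup>+\<phi>. (\<Prod>i<n. \<integral>\<^sup>+z. F i z \<partial>Dk k K (edge_features k E \<phi> i)) \<partial>Phi)"
proof -
  have m: "(\<lambda>Z. \<Prod>i<n. F i (Z i)) \<in> borel_measurable ZZ"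
  proof (rule borel_measurable_prod_ennreal)
    fix i assume "i \<in> {..<n}"
    then show "(\<lambda>Z. F i (Z i)) \<in> borel_measurable ZZ"
      using measurable_comp[OF measurable_component_singleton[of i "{..<n}" "\<lambda>_. Zspace k"] F[of i]]
      by (auto simp: comp_def)
  qed
  have "(\<integral>\<^sup>+Z. (\<Prod>i<n. F i (Z i)) \<partial>PP) = (\<integral>\<^sup>+\<phi>. \<integral>\<^sup>+Z. (\<Prod>i<n. F i (Z i)) \<partial>kern \<phi> \<partial>Phi)"
    unfolding PP_eq by (rule nn_integral_bind[OF m kern_sub])
  also have "\<dots> = (\<integral>\<^sup>+\<phi>. (\<Prod>i<n. \<integral>\<^sup>+z. F i z \<partial>Dk k K (edge_features k E \<phi> i)) \<partial>Phi)"
  proof (rule nn_integral_cong)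
    fix \<phi> assume \<phi>: "\<phi> \<in> space Phi"
    show "(\<integral>\<^sup>+Z. (\<Prod>i<n. F i (Z i)) \<partial>kern \<phi>) = (\<Prod>i<n. \<integral>\<^sup>+z. F i z \<partial>Dk k K (edge_features k E \<phi> i))"
    proof (rule nn_integral_PiM_prod_fin)
      show "F i \<in> borel_measurable (Dk k K (edge_features k E \<phi> i))" if "i \<in> {..<n}" for i
        using that F measurable_cong_sets[OF Dk_ef_sets[OF _ \<phi>] refl, of i borel] by auto
    qed (use Dk_ef_prob \<phi> in auto)
  qed
  finally show ?thesis .
qed

lemma nn_JJ:
  assumes f: "f \<in> borel_measurable (Zspace k)"
  shows "(\<integral>\<^sup>+z. f z \<partial>JJ) = (\<integral>\<^sup>+x. \<integral>\<^sup>+z. f z \<partial>Dk k K x \<partial>R)"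
  unfolding JJ_eq by (rule nn_integral_bind[OF f Dk_sub])

lemma marg_nn:
  assumes g: "g \<in> borel_measurable R" and i: "i < n"
  shows "(\<integral>\<^sup>+\<phi>. g (edge_features k E \<phi> i) \<partial>Phi) = (\<integral>\<^sup>+x. g x \<partial>R)"
proof -
  have "(\<integral>\<^sup>+x. g x \<partial>distr Phi R (\<lambda>\<phi>. edge_features k E \<phi> i)) = (\<integral>\<^sup>+\<phi>. g (edge_features k E \<phi> i) \<partial>Phi)"
    by (rule nn_integral_distr[OF ef_measR[OF i]]) (simp add: g)
  then show ?thesis using marg[OF i] by simp
qed

lemma marg_int:
  fixes g :: "_ \<Rightarrow> real"
  assumes g: "g \<in> borel_measurable R" and i: "i < n"
  shows "(\<integral>\<phi>. g (edge_features k E \<phi> i) \<partial>Phi) = (\<integral>x. g x \<partial>R)"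
proof -
  have "(\<integral>x. g x \<partial>distr Phi R (\<lambda>\<phi>. edge_features k E \<phi> i)) = (\<integral>\<phi>. g (edge_features k E \<phi> i) \<partial>Phi)"
    by (rule integral_distr[OF ef_measR[OF i]]) (simp add: g)
  then show ?thesis using marg[OF i] by simp
qed

lemma null_PP:
  assumes D: "D \<in> sets (Zspace k)" and D0: "emeasure JJ D = 0"
  shows "{Z \<in> space PP. \<exists>i<n. Z i \<in> D} \<in> sets PP" "emeasure PP {Z \<in> space PP. \<exists>i<n. Z i \<in> D} = 0"
proof -
  define A where "A i = {Z \<in> space PP. Z i \<in> D}" for i
  have Ameas: "A i \<in> sets PP" if "i < n" for i
  proof -
    have "A i = (\<lambda>Z. Z i) -` D \<inter> space ZZ" unfolding A_def space_PP by auto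
    also have "\<dots> \<in> sets ZZ"
      by (rule measurable_sets[OF measurable_component_singleton[of i "{..<n}" "\<lambda>_. Zspace k"] D]) (use that in auto)
    finally show ?thesis using sets_PP by simp
  qed
  have eqU: "{Z \<in> space PP. \<exists>i<n. Z i \<in> D} = (\<Union>i\<in>{..<n}. A i)" unfolding A_def by auto
  show "{Z \<in> space PP. \<exists>i<n. Z i \<in> D} \<in> sets PP" unfolding eqU using Ameas by auto
  have A0: "emeasure PP (A i) = 0" if i: "i < n" for i
  proof -
    define F where "F j z = (if j = i then indicator D z else 1 :: ennreal)" for j z
    have Fm: "F j \<in> borel_measurable (Zspace k)" for j unfolding F_def using D by auto
    have "emeasure PP (A i) = (\<integral>\<^sup>+Z. indicator (A i) Z \<partial>PP)" using Ameas[OF i] by simp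
    also have "\<dots> = (\<integral>\<^sup>+Z. (\<Prod>j<n. F j (Z j)) \<partial>PP)"
      by (rule nn_integral_cong) (use i in \<open>auto simp: A_def F_def prod.delta indicator_def\<close>)
    also have "\<dots> = (\<integral>\<^sup>+\<phi>. (\<Prod>j<n. \<integral>\<^sup>+z. F j z \<partial>Dk k K (edge_features k E \<phi> j)) \<partial>Phi)"
      by (rule nn_PP_prod[OF Fm])
    also have "\<dots> = (\<integral>\<^sup>+\<phi>. emeasure (Dk k K (edge_features k E \<phi> i)) D \<partial>Phi)"
    proof (rule nn_integral_cong)
      fix \<phi> assume \<phi>: "\<phi> \<in> space Phi"
      have "(\<integral>\<^sup>+z. F j z \<partial>Dk k K (edge_features k E \<phi> j)) = (if j = i then emeasure (Dk k K (edge_features k E \<phi> i)) D else 1)"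
        if j: "j < n" for j
      proof (cases "j = i")
        case True
        then show ?thesis using D Dk_ef_sets[OF j \<phi>] by (simp add: F_def)
      next
        case False
        then show ?thesis using prob_space.emeasure_space_1[OF Dk_ef_prob[OF j \<phi>]] by (simp add: F_def)
      qed
      then have "(\<Prod>j<n. \<integral>\<^sup>+z. F j z \<partial>Dk k K (edge_features k E \<phi> j)) = (\<Prod>j<n. (if j = i then emeasure (Dk k K (edge_features k E \<phi> i)) D else 1))"
        by (intro prod.cong) auto
      also have "\<dots> = emeasure (Dk k K (edge_features k E \<phi> i)) D" using i by (simp add: prod.delta)
      finally show "(\<Prod>j<n. \<integral>\<^sup>+z. F j z \<partial>Dk k K (edge_features k E \<phi> j)) = emeasure (Dk k K (edge_features k E \<phi> i)) D" .
    qed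
    also have "\<dots> = (\<integral>\<^sup>+x. emeasure (Dk k K x) D \<partial>R)"
      by (rule marg_nn[OF _ i], rule measurable_comp[OF Dk_sub measurable_emeasure_subprob_algebra[OF D], unfolded comp_def])
    also have "\<dots> = emeasure JJ D"
      unfolding JJ_eq by (rule emeasure_bind[symmetric, OF _ Dk_sub D]) (use probR prob_space.not_empty in blast)
    finally show ?thesis using D0 by simp
  qed
  have "emeasure PP (\<Union>i\<in>{..<n}. A i) \<le> (\<Sum>i\<in>{..<n}. emeasure PP (A i))"
    by (rule emeasure_subadditive_finite) (use Ameas in auto)
  also have "\<dots> = 0" using A0 by simp
  finally show "emeasure PP {Z \<in> space PP. \<exists>i<n. Z i \<in> D} = 0" unfolding eqU by simp
qed

end



lemma exp_bnds:
  fixes l B :: real assumes "0 \<le> l" "\<bar>y\<bar> \<le> B"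
  shows "exp (- (l * B)) \<le> exp (l * y) \<and> exp (l * y) \<le> exp (l * B)"
proof -
  have "l * y \<le> l * B" "- (l * B) \<le> l * y"
  proof -
    show "l * y \<le> l * B" using assms by (auto intro!: mult_left_mono simp: abs_le_iff)
    have "l * (- y) \<le> l * B" using assms by (intro mult_left_mono) (auto simp: abs_le_iff)
    then show "- (l * B) \<le> l * y" by simp
  qed
  then show ?thesis by auto
qed

lemma hl:
  fixes Y :: "'a \<Rightarrow> real"
  assumes M: "prob_space M" and Ym: "Y \<in> borel_measurable M"
    and Yb: "\<And>z. \<bar>Y z\<bar> \<le> B" and l: "0 \<le> l" and w: "0 \<le> w" "w \<le> 1"
  shows "enn2real (\<integral>\<^sup>+z. ennreal (exp (l * Y z)) \<partial>M) = (\<integral>z. exp (l * Y z) \<partial>M)"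
    and "exp (- (l * B)) \<le> (\<integral>z. exp (l * Y z) \<partial>M) \<and> (\<integral>z. exp (l * Y z) \<partial>M) \<le> exp (l * B)"
    and "(\<integral>\<^sup>+z. ennreal (exp (l * w * Y z)) \<partial>M) \<le> ennreal ((\<integral>z. exp (l * Y z) \<partial>M) powr w)"
    and "(\<integral>\<^sup>+z. ennreal (exp (l * Y z)) \<partial>M) = ennreal (\<integral>z. exp (l * Y z) \<partial>M)"
proof -
  interpret prob_space M by fact
  have em: "(\<lambda>z. exp (l * Y z)) \<in> borel_measurable M" using Ym by measurable
  have eb: "exp (- (l * B)) \<le> exp (l * Y z) \<and> exp (l * Y z) \<le> exp (l * B)" for z
    by (rule exp_bnds[OF l Yb])
  note ib = int_bounds[OF M em, of "exp (- (l * B))" "exp (l * B)"]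
  show b: "exp (- (l * B)) \<le> (\<integral>z. exp (l * Y z) \<partial>M) \<and> (\<integral>z. exp (l * Y z) \<partial>M) \<le> exp (l * B)"
    using ib(1) eb by blast
  have int: "integrable M (\<lambda>z. exp (l * Y z))" using ib(2) eb by blast
  show "enn2real (\<integral>\<^sup>+z. ennreal (exp (l * Y z)) \<partial>M) = (\<integral>z. exp (l * Y z) \<partial>M)"
    by (subst nn_integral_eq_integral[OF int]) auto
  show "(\<integral>\<^sup>+z. ennreal (exp (l * Y z)) \<partial>M) = ennreal (\<integral>z. exp (l * Y z) \<partial>M)"
    by (rule nn_integral_eq_integral[OF int]) auto
  have emw: "(\<lambda>z. exp (l * w * Y z)) \<in> borel_measurable M" using Ym by measurable
  have ebw: "exp (- (l * w * B)) \<le> exp (l * w * Y z) \<and> exp (l * w * Y z) \<le> exp (l * w * B)" for z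
    using exp_bnds[OF _ Yb, of "l * w"] l w by (simp add: mult.assoc)
  have intw: "integrable M (\<lambda>z. exp (l * w * Y z))"
    using int_bounds(2)[OF M emw] ebw by blast
  have "(\<integral>\<^sup>+z. ennreal (exp (l * w * Y z)) \<partial>M) = ennreal (\<integral>z. exp (l * w * Y z) \<partial>M)"
    by (rule nn_integral_eq_integral[OF intw]) auto
  also have "(\<integral>z. exp (l * w * Y z) \<partial>M) = (\<integral>z. (\<Prod>i\<in>{0::nat}. exp (l * Y z) powr w) \<partial>M)"
    by (simp add: powr_def mult_ac)
  also have "\<dots> \<le> (\<Prod>i\<in>{0::nat}. (\<integral>z. exp (l * Y z) \<partial>M) powr w)"
    by (rule holder_prod[OF M, where a="exp (- (l * B))" and b="exp (l * B)" and f="\<lambda>_ z. exp (l * Y z)" and w="\<lambda>_. w"])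
       (use em eb w in auto)
  finally show "(\<integral>\<^sup>+z. ennreal (exp (l * w * Y z)) \<partial>M) \<le> ennreal ((\<integral>z. exp (l * Y z) \<partial>M) powr w)"
    by (simp add: ennreal_leI)
qed



context netsetup begin

lemma feas_w:
  assumes w: "feasible_weighting k n V E w" and i: "i < n"
  shows "0 \<le> w i" "w i \<le> 1"
proof -
  show w0: "0 \<le> w i" using w i by (auto simp: feasible_weighting_def)
  have v: "E i 0 \<in> V 0" using G k0 i by (auto simp: kpartite_hypergraph_def)
  have "w i \<le> (\<Sum>i'\<in>{i'. i' < n \<and> E i' 0 = E i 0}. w i')"
    by (rule member_le_sum) (use i w in \<open>auto simp: feasible_weighting_def\<close>)
  also have "\<dots> \<le> 1" using w k0 v by (auto simp: feasible_weighting_def)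
  finally show "w i \<le> 1" .
qed

lemma chernoff:
  fixes Y :: "(nat \<Rightarrow> 'x) \<times> real \<Rightarrow> real" and w :: "nat \<Rightarrow> real"
  assumes Ym[measurable]: "Y \<in> borel_measurable (Zspace k)" and Yb: "\<And>z. \<bar>Y z\<bar> \<le> B"
    and E0: "(\<integral>z. Y z \<partial>JJ) = 0" and Vr: "(\<integral>z. (Y z)\<^sup>2 \<partial>JJ) \<le> Vr"
    and l: "0 \<le> l" "l * B < 3"
    and w: "feasible_weighting k n V E w" and s: "s = (\<Sum>i<n. w i)"
  shows "{Z \<in> space PP. s * t < (\<Sum>i<n. w i * Y (Z i))} \<in> sets PP"
    and "emeasure PP {Z \<in> space PP. s * t < (\<Sum>i<n. w i * Y (Z i))}
          \<le> ennreal (exp (- (l * s * t) + s * (l\<^sup>2 * Vr / (2 * (1 - l * B / 3)))))"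
proof -
  note w0 = feas_w(1)[OF w] and w1 = feas_w(2)[OF w]
  define A where "A = {Z \<in> space PP. s * t < (\<Sum>i<n. w i * Y (Z i))}"
  define G where "G x = enn2real (\<integral>\<^sup>+z. ennreal (exp (l * Y z)) \<partial>Dk k K x)" for x
  define cc where "cc = l\<^sup>2 * Vr / (2 * (1 - l * B / 3))"
  have pm: "Measurable.pred ZZ (\<lambda>Z. s * t < (\<Sum>i<n. w i * Y (Z i)))" by measurable
  have AZ: "A = {Z \<in> space ZZ. s * t < (\<Sum>i<n. w i * Y (Z i))}" unfolding A_def space_PP ..
  show Ameas: "{Z \<in> space PP. s * t < (\<Sum>i<n. w i * Y (Z i))} \<in> sets PP"
    using pm sets_PP unfolding A_def[symmetric] AZ by simp
  have Dkx: "prob_space (Dk k K x)" "sets (Dk k K x) = sets (Zspace k)" if "x \<in> space R" for x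
    using Dk_prob[OF K, of x] that space_R by auto
  have YmD: "Y \<in> borel_measurable (Dk k K x)" if "x \<in> space R" for x
    by (subst measurable_cong_sets[OF Dkx(2)[OF that] refl]) (rule Ym)
  have Gm: "G \<in> borel_measurable R"
    unfolding G_def
    by (rule borel_measurable_enn2real,
        rule measurable_comp[OF Dk_sub nn_integral_measurable_subprob_algebra, unfolded comp_def]) measurable
  have Geq: "G x = (\<integral>z. exp (l * Y z) \<partial>Dk k K x)" if "x \<in> space R" for x
    unfolding G_def by (rule hl(1)[OF Dkx(1)[OF that] YmD[OF that] Yb l(1), where w=0]) auto
  have Gb: "exp (- (l * B)) \<le> G x \<and> G x \<le> exp (l * B)" if "x \<in> space R" for x
    using hl(2)[OF Dkx(1)[OF that] YmD[OF that] Yb l(1), where w=0] Geq[OF that] by simp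
  have "emeasure PP A = (\<integral>\<^sup>+Z. indicator A Z \<partial>PP)" using Ameas unfolding A_def by simp
  also have "\<dots> \<le> (\<integral>\<^sup>+Z. ennreal (exp (- (l * s * t))) * (\<Prod>i<n. ennreal (exp (l * w i * Y (Z i)))) \<partial>PP)"
  proof (rule nn_integral_mono)
    fix Z assume Z: "Z \<in> space PP"
    have eq: "ennreal (exp (- (l * s * t))) * (\<Prod>i<n. ennreal (exp (l * w i * Y (Z i))))
        = ennreal (exp (l * ((\<Sum>i<n. w i * Y (Z i)) - s * t)))"
      by (simp add: prod_ennreal ennreal_mult[symmetric] exp_sum[symmetric] exp_add[symmetric]
          sum_distrib_left algebra_simps)
    show "indicator A Z \<le> ennreal (exp (- (l * s * t))) * (\<Prod>i<n. ennreal (exp (l * w i * Y (Z i))))"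
    proof (cases "Z \<in> A")
      case True
      then have "0 \<le> l * ((\<Sum>i<n. w i * Y (Z i)) - s * t)" using l by (auto simp: A_def)
      then show ?thesis using True by (simp add: eq)
    qed simp
  qed
  also have "\<dots> = ennreal (exp (- (l * s * t))) * (\<integral>\<^sup>+Z. (\<Prod>i<n. ennreal (exp (l * w i * Y (Z i)))) \<partial>PP)"
    by (rule nn_integral_cmult, subst measurable_cong_sets[OF sets_PP refl]) measurable
  also have "(\<integral>\<^sup>+Z. (\<Prod>i<n. ennreal (exp (l * w i * Y (Z i)))) \<partial>PP)
      = (\<integral>\<^sup>+\<phi>. (\<Prod>i<n. \<integral>\<^sup>+z. ennreal (exp (l * w i * Y z)) \<partial>Dk k K (edge_features k E \<phi> i)) \<partial>Phi)"
    by (rule nn_PP_prod) measurable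
  also have "\<dots> \<le> (\<integral>\<^sup>+\<phi>. (\<Prod>i<n. ennreal (G (edge_features k E \<phi> i) powr w i)) \<partial>Phi)"
  proof (rule nn_integral_mono)
    fix \<phi> assume \<phi>: "\<phi> \<in> space Phi"
    show "(\<Prod>i<n. \<integral>\<^sup>+z. ennreal (exp (l * w i * Y z)) \<partial>Dk k K (edge_features k E \<phi> i))
        \<le> (\<Prod>i<n. ennreal (G (edge_features k E \<phi> i) powr w i))"
    proof (rule prod_mono_ennreal)
      fix i assume i: "i \<in> {..<n}"
      have x: "edge_features k E \<phi> i \<in> space R" using measurable_space[OF ef_measR \<phi>] i by simp
      show "(\<integral>\<^sup>+z. ennreal (exp (l * w i * Y z)) \<partial>Dk k K (edge_features k E \<phi> i))
          \<le> ennreal (G (edge_features k E \<phi> i) powr w i)"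
        using hl(3)[OF Dkx(1)[OF x] YmD[OF x] Yb l(1) w0 w1] i Geq[OF x] by auto
    qed
  qed
  also have "\<dots> = (\<integral>\<^sup>+\<phi>. ennreal (\<Prod>i<n. G (edge_features k E \<phi> i) powr w i) \<partial>Phi)"
    by (rule nn_integral_cong) (simp add: prod_ennreal)
  also have "\<dots> = ennreal (\<integral>\<phi>. (\<Prod>i<n. G (edge_features k E \<phi> i) powr w i) \<partial>Phi)"
  proof (rule nn_integral_eq_integral)
    have m: "(\<lambda>\<phi>. \<Prod>i<n. G (edge_features k E \<phi> i) powr w i) \<in> borel_measurable Phi"
      using measurable_comp[OF ef_measR Gm] by (auto simp: comp_def intro!: borel_measurable_prod)
    show "integrable Phi (\<lambda>\<phi>. \<Prod>i<n. G (edge_features k E \<phi> i) powr w i)"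
    proof (rule int_bounds(2)[OF probPhi m])
      fix \<phi> assume \<phi>: "\<phi> \<in> space Phi"
      show "0 \<le> (\<Prod>i<n. G (edge_features k E \<phi> i) powr w i) \<and> (\<Prod>i<n. G (edge_features k E \<phi> i) powr w i) \<le> (\<Prod>i<n. exp (l * B) powr w i)"
        by (rule prod_powr_bounds[where a="exp (- (l * B))"])
           (use Gb measurable_space[OF ef_measR \<phi>] w0 in auto)
    qed
  qed (simp add: prod_nonneg)
  also have "(\<integral>\<phi>. (\<Prod>i<n. G (edge_features k E \<phi> i) powr w i) \<partial>Phi)
      \<le> (\<Prod>i<n. (\<integral>\<phi>. G (edge_features k E \<phi> i) \<partial>Phi) powr w i)"
  proof (rule finner_fin[where e="\<lambda>i. (\<lambda>j. (j, E i j)) ` {..<k}" and a="exp (- (l * B))" and b="exp (l * B)"])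
    show "finite SS" by (rule finS)
    show "prob_space (\<rho> (fst v))" if "v \<in> SS" for v using that rho by auto
    show "(\<lambda>\<phi>. G (edge_features k E \<phi> i)) \<in> borel_measurable Phi" if "i \<in> {..<n}" for i
      using measurable_comp[OF ef_measR Gm, of i] that by (simp add: comp_def)
    show "exp (- (l * B)) \<le> G (edge_features k E \<phi> i) \<and> G (edge_features k E \<phi> i) \<le> exp (l * B)"
      if "i \<in> {..<n}" "\<phi> \<in> space Phi" for i \<phi>
      using Gb measurable_space[OF ef_measR that(2)] that(1) by auto
    show "G (edge_features k E x i) = G (edge_features k E y i)"
      if "i \<in> {..<n}" "\<And>v. v \<in> (\<lambda>j. (j, E i j)) ` {..<k} \<Longrightarrow> x v = y v" for i x y
    proof -
      have "edge_features k E x i = edge_features k E y i"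
        unfolding edge_features_def using that(2) by (intro restrict_ext) auto
      then show ?thesis by simp
    qed
    show "0 \<le> w i" if "i \<in> {..<n}" for i using w0 that by auto
    show "(\<Sum>i\<in>{i\<in>{..<n}. v \<in> (\<lambda>j. (j, E i j)) ` {..<k}}. w i) \<le> 1" if v: "v \<in> SS" for v
    proof -
      obtain j u where vu: "v = (j, u)" "j < k" "u \<in> V j" using v by auto
      have "{i\<in>{..<n}. v \<in> (\<lambda>j. (j, E i j)) ` {..<k}} = {i. i < n \<and> E i j = u}"
        using vu by auto
      then show ?thesis using w vu by (auto simp: feasible_weighting_def)
    qed
  qed (use w0 in auto)
  also have "\<dots> = (\<Prod>i<n. (\<integral>x. G x \<partial>R) powr w i)"
    by (rule prod.cong[OF refl]) (simp add: marg_int[OF Gm])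
  also have "\<dots> \<le> (\<Prod>i<n. exp cc powr w i)"
  proof (rule prod_mono)
    fix i assume i: "i \<in> {..<n}"
    have Gint: "integrable R G" using int_bounds(2)[OF probR Gm Gb] .
    have "ennreal (\<integral>x. G x \<partial>R) = (\<integral>\<^sup>+x. G x \<partial>R)"
      by (rule nn_integral_eq_integral[symmetric, OF Gint]) (use Gb in \<open>auto intro!: AE_I2 order.trans[OF _ Gb[THEN conjunct1]]\<close>)
    also have "\<dots> = (\<integral>\<^sup>+x. \<integral>\<^sup>+z. ennreal (exp (l * Y z)) \<partial>Dk k K x \<partial>R)"
    proof (rule nn_integral_cong)
      fix x assume x: "x \<in> space R"
      show "ennreal (G x) = (\<integral>\<^sup>+z. ennreal (exp (l * Y z)) \<partial>Dk k K x)"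
        using hl(4)[OF Dkx(1)[OF x] YmD[OF x] Yb l(1), where w=0] Geq[OF x] by simp
    qed
    also have "\<dots> = (\<integral>\<^sup>+z. ennreal (exp (l * Y z)) \<partial>JJ)"
      by (rule nn_JJ[symmetric]) measurable
    also have "\<dots> = ennreal (\<integral>z. exp (l * Y z) \<partial>JJ)"
      by (rule hl(4)[OF probJJ _ Yb l(1), where w=0], subst measurable_cong_sets[OF sets_JJ refl]) (simp_all add: Ym)
    finally have eq: "ennreal (\<integral>x. G x \<partial>R) = ennreal (\<integral>z. exp (l * Y z) \<partial>JJ)" .
    have GJ: "(\<integral>x. G x \<partial>R) = (\<integral>z. exp (l * Y z) \<partial>JJ)"
    proof -
      have "exp (- (l * B)) \<le> (\<integral>x. G x \<partial>R)" using int_bounds(1)[OF probR Gm Gb] by simp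
      then have "0 \<le> (\<integral>x. G x \<partial>R)" using exp_gt_zero[of "- (l * B)"] by linarith
      moreover have "0 \<le> (\<integral>z. exp (l * Y z) \<partial>JJ)" by (rule integral_nonneg_AE) auto
      ultimately show ?thesis using eq by (simp add: ennreal_inj)
    qed
    have "(\<integral>z. exp (l * Y z) \<partial>JJ) \<le> exp cc"
      unfolding cc_def
      by (rule mgf_bern[OF probJJ _ _ E0 Vr l], subst measurable_cong_sets[OF sets_JJ refl]) (simp_all add: Ym Yb)
    moreover have "exp (- (l * B)) \<le> (\<integral>x. G x \<partial>R)"
      using int_bounds(1)[OF probR Gm Gb] by simp
    ultimately show "0 \<le> (\<integral>x. G x \<partial>R) powr w i \<and> (\<integral>x. G x \<partial>R) powr w i \<le> exp cc powr w i"
      using GJ w0 i by (auto intro!: powr_mono2 order.trans[OF _ \<open>exp (- (l * B)) \<le> _\<close>])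
  qed
  also have "(\<Prod>i<n. exp cc powr w i) = exp (s * cc)"
    by (simp add: powr_def exp_sum[symmetric] s sum_distrib_left mult_ac)
  finally have that_ineq: "emeasure PP A \<le> ennreal (exp (- (l * s * t))) * ennreal (exp (s * cc))"
    by (simp add: mult_left_mono ennreal_leI)
  then show "emeasure PP {Z \<in> space PP. s * t < (\<Sum>i<n. w i * Y (Z i))}
          \<le> ennreal (exp (- (l * s * t) + s * (l\<^sup>2 * Vr / (2 * (1 - l * B / 3)))))"
  proof -
    have "ennreal (exp (- (l * s * t))) * ennreal (exp (s * cc)) = ennreal (exp (- (l * s * t) + s * cc))"
      by (simp add: ennreal_mult[symmetric] exp_add[symmetric])
    then show ?thesis using that_ineq unfolding A_def cc_def by simp
  qed
qed

end



lemma cover_alg: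
  fixes a e mg mh Eg Eh :: real
  assumes a: "0 < a" "a \<le> 1" and e: "0 < e" and mg: "0 \<le> mg" and mh: "0 \<le> mh"
    and dm: "\<bar>mg - mh\<bar> \<le> a * e" and dE: "\<bar>Eg - Eh\<bar> \<le> a * e"
    and ev: "4 * a * sqrt e * sqrt (mg + e) < mg - Eg"
  shows "a * sqrt e * sqrt (mh + e) < mh - Eh"
proof -
  define q where "q = sqrt (mg + e)"
  define p where "p = sqrt (mh + e)"
  define r where "r = sqrt e"
  define X where "X = a * r * q"
  have r0: "0 < r" using e by (simp add: r_def)
  have q0: "0 \<le> q" "0 \<le> p" using mg mh e by (simp_all add: q_def p_def)
  have rq: "r \<le> q" unfolding r_def q_def using mg by (subst real_sqrt_le_iff) simp
  have r2: "r * r = e" using e by (simp add: r_def)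
  have p2: "p * p = mh + e" using mh e by (simp add: p_def)
  have q2: "q * q = mg + e" using mg e by (simp add: q_def)
  have ae: "a * e \<le> e" using a e by (simp add: mult_left_le_one_le)
  have mhg: "mh \<le> mg + a * e" using dm by (simp add: abs_le_iff)
  have "(2 * q) * (2 * q) = 4 * (q * q)" by simp
  then have pp: "p * p \<le> (2 * q) * (2 * q)" using p2 q2 ae mhg mg e by linarith
  have pq: "p \<le> 2 * q" by (rule power2_le_imp_le) (use pp q0 in \<open>simp_all add: power2_eq_square\<close>)
  have f1: "a * r * p \<le> a * r * (2 * q)" using pq a r0 by (intro mult_left_mono) auto
  then have f1': "a * r * p \<le> 2 * X" by (simp add: X_def)
  have "a * r * r \<le> a * r * q" using rq a r0 by (intro mult_left_mono) auto
  then have f2: "a * e \<le> X" using r2 by (simp add: mult.assoc X_def)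
  have f3: "mg - Eg - 2 * (a * e) \<le> mh - Eh" using dm dE by (simp add: abs_le_iff)
  have f4: "4 * X < mg - Eg" using ev by (simp add: X_def r_def q_def mult.assoc)
  have "a * r * p < mh - Eh" using f1' f2 f3 f4 by linarith
  then show ?thesis unfolding p_def r_def .
qed

lemma expo_alg:
  fixes t Vr B s c m a2e :: real
  assumes t: "0 < t" and c: "0 < c" and m: "0 < m" and B: "0 \<le> B" and s: "0 \<le> s"
    and Vr: "Vr = c * m" and tm: "t \<le> m" and t2: "t * t = a2e * m"
  shows "- (t / (Vr + B * t / 3) * s * t) + s * ((t / (Vr + B * t / 3))\<^sup>2 * Vr / (2 * (1 - t / (Vr + B * t / 3) * B / 3)))
         \<le> - (a2e * s) / (2 * c + 2 / 3 * B)"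
proof -
  define D where "D = Vr + B * t / 3"
  have V0: "0 < Vr" using Vr c m by simp
  have "0 \<le> B * t / 3" using B t by simp
  then have D0: "0 < D" using V0 by (simp add: D_def)
  have one: "1 - t / D * B / 3 = Vr / D" using D0 by (simp add: D_def field_simps)
  have lhs: "- (t / D * s * t) + s * ((t / D)\<^sup>2 * Vr / (2 * (1 - t / D * B / 3))) = - (s * (t * t) / (2 * D))"
    unfolding one using D0 V0 by (simp add: field_simps power2_eq_square)
  have "a2e * s / (2 * c + 2 / 3 * B) \<le> s * (t * t) / (2 * D)"
  proof -
    have "a2e * (2 * D) \<le> (t * t) * (2 * c + 2 / 3 * B)"
    proof -
      have "a2e * (2 * D) = a2e * 2 * c * m + a2e * 2 * B * t / 3" by (simp add: D_def Vr algebra_simps)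
      also have "\<dots> \<le> a2e * 2 * c * m + a2e * 2 * B * m / 3"
      proof -
        have "a2e = t * t / m" using t2 m by (simp add: field_simps)
        then have a2e0: "0 \<le> a2e" using m by simp
        have "a2e * 2 * B * t \<le> a2e * 2 * B * m" using tm a2e0 B by (intro mult_left_mono) auto
        then have "a2e * 2 * B * t / 3 \<le> a2e * 2 * B * m / 3" by (rule divide_right_mono) simp
        then show ?thesis by linarith
      qed
      also have "\<dots> = (t * t) * (2 * c + 2 / 3 * B)" by (simp add: t2 algebra_simps)
      finally show ?thesis .
    qed
    moreover have "0 < 2 * c + 2 / 3 * B" using c B by simp
    ultimately have "a2e / (2 * c + 2 / 3 * B) \<le> (t * t) / (2 * D)"
      using D0 by (simp add: divide_le_eq le_divide_eq mult.commute mult.left_commute)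
    then have "s * (a2e / (2 * c + 2 / 3 * B)) \<le> s * ((t * t) / (2 * D))" by (rule mult_left_mono[OF _ s])
    then show ?thesis by (simp add: mult.commute)
  qed
  then show ?thesis unfolding D_def[symmetric] lhs by simp
qed



lemma Zset_sets:
  assumes "\<And>j. j < k \<Longrightarrow> X j \<in> sets borel"
  shows "Zset k X \<in> sets (Zspace k)"
  unfolding Zset_def Zspace_def
  by (rule pair_measureI[OF sets_PiM_I_finite]) (use assms in auto)

context netsetup begin

lemma Zset_null:
  assumes X1: "\<And>j. j < k \<Longrightarrow> emeasure (\<rho> j) (X j) = 1" and Xs: "\<And>j. j < k \<Longrightarrow> X j \<in> sets borel"
  shows "emeasure JJ (space (Zspace k) - Zset k X) = 0"
proof -
  define D where "D = space (Zspace k) - Zset k X"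
  have Ds: "D \<in> sets (Zspace k)" unfolding D_def using Zset_sets[OF Xs] by auto
  have PX: "PiE {..<k} X \<in> sets R"
    by (rule sets_PiM_I_finite) (use Xs rho_sets in auto)
  have "emeasure R (prod_emb {..<k} \<rho> {..<k} (PiE {..<k} X)) = (\<Prod>j<k. emeasure (\<rho> j) (X j))"
    by (rule emeasure_PiM_emb) (use rho Xs rho_sets in auto)
  moreover have "prod_emb {..<k} \<rho> {..<k} (PiE {..<k} X) = PiE {..<k} X"
  proof (rule prod_emb_PiE_same_index)
    fix j assume j: "j \<in> {..<k}"
    have "X j \<in> sets (\<rho> j)" using Xs[of j] rho_sets[of j] j by simp
    then show "X j \<subseteq> space (\<rho> j)" by (rule sets.sets_into_space)
  qed
  ultimately have R1: "emeasure R (PiE {..<k} X) = 1" using X1 by simp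
  have "emeasure R (space R - PiE {..<k} X) = emeasure R (space R) - emeasure R (PiE {..<k} X)"
    by (rule emeasure_compl[OF PX]) (simp add: R1)
  also have "\<dots> = 0" using R1 prob_space.emeasure_space_1[OF probR] by simp
  finally have AEX: "AE x in R. x \<in> PiE {..<k} X"
    using AE_iff_measurable[of "space R - PiE {..<k} X" R "\<lambda>x. x \<in> PiE {..<k} X"] PX by auto
  have "emeasure JJ D = (\<integral>\<^sup>+x. emeasure (Dk k K x) D \<partial>R)"
    unfolding JJ_eq by (rule emeasure_bind[OF _ Dk_sub Ds]) (use probR prob_space.not_empty in blast)
  also have "\<dots> = (\<integral>\<^sup>+x. 0 \<partial>R)"
  proof (rule nn_integral_cong_AE)
    show "AE x in R. emeasure (Dk k K x) D = 0"
    proof (rule AE_mp[OF AEX], rule AE_I2, rule impI)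
      fix x assume x: "x \<in> space R" and xX: "x \<in> PiE {..<k} X"
      have x0: "x \<in> space R0" using x space_R by simp
      have Kx: "sets (K x) = sets borel"
        using measurable_space[OF K x0] by (simp add: space_prob_algebra)
      have pm: "(\<lambda>y. (x, y)) \<in> measurable (K x) (Zspace k)"
        unfolding Zspace_def
        by (rule measurable_Pair[OF measurable_const[OF x0] measurable_ident_sets[OF Kx]])
      have "emeasure (Dk k K x) D = emeasure (K x) ((\<lambda>y. (x, y)) -` D \<inter> space (K x))"
        unfolding Dk_def by (rule emeasure_distr[OF pm Ds])
      also have "(\<lambda>y. (x, y)) -` D \<inter> space (K x) = {}"
        using xX by (auto simp: D_def Zset_def)
      finally show "emeasure (Dk k K x) D = 0" by simp
    qed
  qed
  finally show ?thesis unfolding D_def by simp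
qed

end



theorem lemma7:
  fixes k n :: nat
    and V :: "nat \<Rightarrow> 'v set" and E :: "nat \<Rightarrow> nat \<Rightarrow> 'v"
    and X :: "nat \<Rightarrow> 'x::metric_space set"
    and \<rho> :: "nat \<Rightarrow> 'x measure"
    and K :: "(nat \<Rightarrow> 'x) \<Rightarrow> real measure"
    and w :: "nat \<Rightarrow> real" and s c B \<epsilon> \<alpha> :: real
    and \<G> :: "((nat \<Rightarrow> 'x) \<times> real \<Rightarrow> real) set"
  assumes G: "kpartite_hypergraph k n V E"
    and X: "\<And>j. j < k \<Longrightarrow> compact (X j)"
    and rho: "\<And>j. j < k \<Longrightarrow> prob_space (\<rho> j)"
    and rho_sets: "\<And>j. j < k \<Longrightarrow> sets (\<rho> j) = sets borel"
    and rho_X: "\<And>j. j < k \<Longrightarrow> emeasure (\<rho> j) (X j) = 1"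
    and K: "K \<in> measurable (PiM {..<k} (\<lambda>_. borel)) (prob_algebra borel)"
    and w: "optimal_weighting k n V E w"
    and s: "s = frac_matching_number k n V E"
    and c: "c > 0"
    and G_meas: "\<And>g. g \<in> \<G> \<Longrightarrow> g \<in> borel_measurable (Zspace k)"
    and G_pos: "\<And>g. g \<in> \<G> \<Longrightarrow> expect (joint_dist k \<rho> K) g \<ge> 0"
    and G_var: "\<And>g. g \<in> \<G> \<Longrightarrow>
        expect (joint_dist k \<rho> K) (\<lambda>z. (g z)\<^sup>2) \<le> c * expect (joint_dist k \<rho> K) g"
    and G_bd: "\<And>g. g \<in> \<G> \<Longrightarrow>
        AE z in joint_dist k \<rho> K. \<bar>g z - expect (joint_dist k \<rho> K) g\<bar> \<le> B"
    and eps: "\<epsilon> > 0"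
    and alpha: "0 < \<alpha>" "\<alpha> \<le> 1"
  shows "\<exists>A \<in> sets (networked_sample_dist k n V E \<rho> K).
     {Z \<in> space (networked_sample_dist k n V E \<rho> K).
        \<exists>g\<in>\<G>. (expect (joint_dist k \<rho> K) g - weighted_emp_mean n w s g Z)
                 / sqrt (expect (joint_dist k \<rho> K) g + \<epsilon>) > 4 * \<alpha> * sqrt \<epsilon>} \<subseteq> A
     \<and> emeasure (networked_sample_dist k n V E \<rho> K) A
         \<le> covering_number (Zset k X) \<G> (\<alpha> * \<epsilon>)
            * ennreal (exp (- (\<alpha>\<^sup>2 * s * \<epsilon>) / (2 * c + 2 / 3 * B)))"
proof -
  interpret N: netsetup k n V E \<rho> K
    by (rule netsetup.intro[OF G rho rho_sets K])
  let ?P = "networked_sample_dist k n V E \<rho> K"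
  let ?J = "joint_dist k \<rho> K"
  let ?N = "covering_number (Zset k X) \<G> (\<alpha> * \<epsilon>)"
  let ?b = "exp (- (\<alpha>\<^sup>2 * s * \<epsilon>) / (2 * c + 2 / 3 * B))"
  let ?ev = "{Z \<in> space ?P. \<exists>g\<in>\<G>. (expect ?J g - weighted_emp_mean n w s g Z)
                 / sqrt (expect ?J g + \<epsilon>) > 4 * \<alpha> * sqrt \<epsilon>}"
  have wf: "feasible_weighting k n V E w" and ssum: "s = (\<Sum>i<n. w i)"
    using w s by (auto simp: optimal_weighting_def)
  have w0: "0 \<le> w i" if "i < n" for i using N.feas_w(1)[OF wf that] .
  have s0: "0 \<le> s" unfolding ssum by (rule sum_nonneg) (use w0 in auto)
  have bpos: "0 < ?b" by simp
  show ?thesis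
  proof (cases "?N = \<top>")
    case True
    show ?thesis
    proof (rule bexI[of _ "space ?P"], rule conjI)
      show "?ev \<subseteq> space ?P" by auto
      show "emeasure ?P (space ?P) \<le> ?N * ennreal ?b" using True bpos by simp
    qed simp
  next
    case False
    define CS where "CS = {ennreal (real (card C)) | C. finite C \<and> C \<subseteq> \<G> \<and>
            (\<forall>g\<in>\<G>. \<exists>h\<in>C. \<forall>z\<in>Zset k X. \<bar>g z - h z\<bar> \<le> \<alpha> * \<epsilon>)}"
    have NCS: "?N = Inf CS" unfolding covering_number_def CS_def ..
    have "CS \<noteq> {}" using False NCS by (metis Inf_empty top_ennreal_def)
    then obtain x where "x \<in> CS" by blast
    then obtain C0 where "finite C0 \<and> C0 \<subseteq> \<G> \<and> (\<forall>g\<in>\<G>. \<exists>h\<in>C0. \<forall>z\<in>Zset k X. \<bar>g z - h z\<bar> \<le> \<alpha> * \<epsilon>)"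
      unfolding CS_def by blast
    define Q where "Q m \<longleftrightarrow> (\<exists>C. finite C \<and> C \<subseteq> \<G> \<and> (\<forall>g\<in>\<G>. \<exists>h\<in>C. \<forall>z\<in>Zset k X. \<bar>g z - h z\<bar> \<le> \<alpha> * \<epsilon>) \<and> card C = m)" for m
    have "Q (card C0)" unfolding Q_def using \<open>finite C0 \<and> _\<close> by blast
    then have "Q (LEAST m. Q m)" by (rule LeastI)
    then obtain C where Cfin: "finite C" and CG: "C \<subseteq> \<G>"
      and cov: "\<And>g. g \<in> \<G> \<Longrightarrow> \<exists>h\<in>C. \<forall>z\<in>Zset k X. \<bar>g z - h z\<bar> \<le> \<alpha> * \<epsilon>"
      and cardC: "card C = (LEAST m. Q m)" unfolding Q_def by blast
    have CN: "ennreal (real (card C)) \<le> ?N"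
      unfolding NCS
    proof (rule Inf_greatest)
      fix x assume "x \<in> CS"
      then obtain C' where "finite C' \<and> C' \<subseteq> \<G> \<and> (\<forall>g\<in>\<G>. \<exists>h\<in>C'. \<forall>z\<in>Zset k X. \<bar>g z - h z\<bar> \<le> \<alpha> * \<epsilon>)"
        and x: "x = ennreal (real (card C'))" unfolding CS_def by blast
      then have "Q (card C')" unfolding Q_def by blast
      then have "card C \<le> card C'" unfolding cardC by (rule Least_le)
      then show "ennreal (real (card C)) \<le> x" unfolding x by (simp add: ennreal_leI)
    qed
    show ?thesis
    proof (cases "s = 0")
      case True
      show ?thesis
      proof (cases "\<G> = {}")
        case True
        show ?thesis by (rule bexI[of _ "{}"]) (use True in auto)
      next
        case False
        then obtain g where g: "g \<in> \<G>" by auto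
        then have "C \<noteq> {}" using cov[OF g] by auto
        then have "1 \<le> card C" using Cfin by (simp add: Suc_le_eq card_gt_0_iff)
        then have "ennreal 1 \<le> ennreal (real (card C))" by (intro ennreal_leI) simp
        also note CN
        finally have N1: "1 \<le> ?N" by simp
        show ?thesis
        proof (rule bexI[of _ "space ?P"], rule conjI)
          show "?ev \<subseteq> space ?P" by auto
          have "emeasure ?P (space ?P) = 1" by (rule prob_space.emeasure_space_1[OF N.probPP])
          also have "\<dots> \<le> ?N * ennreal ?b" using N1 \<open>s = 0\<close> by simp
          finally show "emeasure ?P (space ?P) \<le> ?N * ennreal ?b" .
        qed simp
      qed
    next
      case False
      then have spos: "0 < s" using s0 by simp
      interpret J: prob_space ?J by (rule N.probJJ)
      have Xs: "X j \<in> sets borel" if "j < k" for j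
        using X[OF that] by (auto intro: borel_closed compact_imp_closed)
      define mu where "mu g = expect ?J g" for g
      have mu_int: "mu g = (\<integral>z. g z \<partial>?J)" for g unfolding mu_def expect_def ..
      have hmJ: "h \<in> borel_measurable ?J" if "h \<in> \<G>" for h
        by (subst measurable_cong_sets[OF N.sets_JJ refl]) (rule G_meas[OF that])
      have hbnd: "AE z in ?J. \<bar>h z - mu h\<bar> \<le> B" if "h \<in> \<G>" for h
        using G_bd[OF that] unfolding mu_def .
      have hint: "integrable ?J h" if "h \<in> \<G>" for h
      proof (rule J.integrable_const_bound[where B="\<bar>mu h\<bar> + B"])
        show "AE x in ?J. norm (h x) \<le> \<bar>mu h\<bar> + B"
          using hbnd[OF that] by eventually_elim (auto simp: abs_le_iff)
      qed (rule hmJ[OF that])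
      have h2int: "integrable ?J (\<lambda>z. (h z)\<^sup>2)" if "h \<in> \<G>" for h
      proof (rule J.integrable_const_bound[where B="(\<bar>mu h\<bar> + B)\<^sup>2"])
        show "AE x in ?J. norm ((h x)\<^sup>2) \<le> (\<bar>mu h\<bar> + B)\<^sup>2"
          using hbnd[OF that]
        proof eventually_elim
          fix x assume "\<bar>h x - mu h\<bar> \<le> B"
          then have "\<bar>h x\<bar> \<le> \<bar>mu h\<bar> + B" by (auto simp: abs_le_iff)
          then have "\<bar>h x\<bar>\<^sup>2 \<le> (\<bar>mu h\<bar> + B)\<^sup>2" by (rule power_mono) simp
          then show "norm ((h x)\<^sup>2) \<le> (\<bar>mu h\<bar> + B)\<^sup>2" by simp
        qed
      qed (use hmJ[OF that] in measurable)
      have B0: "0 \<le> B" if "h \<in> \<G>" for h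
      proof -
        have "AE z in ?J. 0 \<le> B" using hbnd[OF that] by eventually_elim auto
        then show ?thesis by simp
      qed
      have mu0: "0 \<le> mu h" if "h \<in> \<G>" for h using G_pos[OF that] unfolding mu_def .
      define Y where "Y h z = max (- B) (min B (mu h - h z))" for h z
      define t where "t h = \<alpha> * sqrt \<epsilon> * sqrt (mu h + \<epsilon>)" for h
      define Bd where "Bd = (space (Zspace k) - Zset k X) \<union> (\<Union>h\<in>C. {z \<in> space (Zspace k). B < \<bar>h z - mu h\<bar>})"
      define Nb where "Nb = {Z \<in> space ?P. \<exists>i<n. Z i \<in> Bd}"
      define Bh where "Bh h = {Z \<in> space ?P. s * t h < (\<Sum>i<n. w i * Y h (Z i))}" for h
      have hset: "{z \<in> space (Zspace k). B < \<bar>h z - mu h\<bar>} \<in> sets (Zspace k)" if "h \<in> \<G>" for h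
      proof -
        note G_meas[OF that, measurable]
        show ?thesis by measurable
      qed
      have hnull: "emeasure ?J {z \<in> space (Zspace k). B < \<bar>h z - mu h\<bar>} = 0" if "h \<in> \<G>" for h
      proof -
        have s1: "{z \<in> space (Zspace k). B < \<bar>h z - mu h\<bar>} \<in> sets ?J" using hset[OF that] N.sets_JJ by simp
        have s2: "{z \<in> space ?J. \<not> \<bar>h z - mu h\<bar> \<le> B} = {z \<in> space (Zspace k). B < \<bar>h z - mu h\<bar>}"
          using N.space_JJ by auto
        show ?thesis using AE_iff_measurable[OF s1 s2] hbnd[OF that] by simp
      qed
      have Zs: "Zset k X \<in> sets (Zspace k)" by (rule Zset_sets[OF Xs])
      have Znull: "emeasure ?J (space (Zspace k) - Zset k X) = 0" by (rule N.Zset_null[OF rho_X Xs])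
      have Bds: "Bd \<in> sets (Zspace k)"
        unfolding Bd_def using Zs hset CG Cfin by auto
      have UCs: "(\<Union>h\<in>C. {z \<in> space (Zspace k). B < \<bar>h z - mu h\<bar>}) \<in> sets ?J"
        using hset CG Cfin N.sets_JJ by auto
      have Bd0: "emeasure ?J Bd = 0"
      proof -
        have "emeasure ?J Bd \<le> emeasure ?J (space (Zspace k) - Zset k X) + emeasure ?J (\<Union>h\<in>C. {z \<in> space (Zspace k). B < \<bar>h z - mu h\<bar>})"
          unfolding Bd_def by (rule emeasure_subadditive) (use Zs N.sets_JJ UCs in auto)
        also have "emeasure ?J (\<Union>h\<in>C. {z \<in> space (Zspace k). B < \<bar>h z - mu h\<bar>}) \<le> (\<Sum>h\<in>C. emeasure ?J {z \<in> space (Zspace k). B < \<bar>h z - mu h\<bar>})"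
          by (rule emeasure_subadditive_finite[OF Cfin]) (use hset CG N.sets_JJ in auto)
        also have "\<dots> = 0" using hnull CG by (auto intro!: sum.neutral)
        finally show ?thesis using Znull by simp
      qed
      have Nbs: "Nb \<in> sets ?P" and Nb0: "emeasure ?P Nb = 0"
        unfolding Nb_def by (rule N.null_PP[OF Bds Bd0])+
      have Bh_ok: "Bh h \<in> sets ?P \<and> emeasure ?P (Bh h) \<le> ennreal ?b" if hC: "h \<in> C" for h
      proof -
        have hG: "h \<in> \<G>" using hC CG by auto
        note hm[measurable] = G_meas[OF hG]
        have B0h: "0 \<le> B" by (rule B0[OF hG])
        define m where "m = mu h + \<epsilon>"
        have m0: "0 < m" using mu0[OF hG] eps by (simp add: m_def)
        have em: "\<epsilon> \<le> m" using mu0[OF hG] by (simp add: m_def)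
        define Vr where "Vr = c * m"
        define tt where "tt = t h"
        have tt_eq: "tt = \<alpha> * sqrt \<epsilon> * sqrt m" unfolding tt_def t_def m_def ..
        have tt0: "0 < tt" unfolding tt_eq using alpha eps m0 by simp
        have Vr0: "0 < Vr" using c m0 by (simp add: Vr_def)
        define D where "D = Vr + B * tt / 3"
        have D0: "0 < D" using Vr0 B0h tt0 unfolding D_def by (simp add: add_pos_nonneg)
        define l where "l = tt / D"
        have l0: "0 \<le> l" using tt0 D0 by (simp add: l_def)
        have lB: "l * B < 3"
        proof -
          have "tt * B < 3 * D" using Vr0 unfolding D_def by simp
          then have "tt * B / D < 3" using D0 by (simp add: pos_divide_less_eq)
          then show ?thesis by (simp add: l_def mult.commute)
        qed
        have Ym: "Y h \<in> borel_measurable (Zspace k)" unfolding Y_def by measurable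
        have YmJ: "Y h \<in> borel_measurable ?J"
          by (subst measurable_cong_sets[OF N.sets_JJ refl]) (rule Ym)
        have Yb: "\<bar>Y h z\<bar> \<le> B" for z unfolding Y_def using B0h by auto
        have Yae: "AE z in ?J. Y h z = mu h - h z"
          using hbnd[OF hG] by eventually_elim (auto simp: Y_def abs_le_iff)
        have hmJ': "h \<in> borel_measurable ?J" by (rule hmJ[OF hG])
        have EY: "(\<integral>z. Y h z \<partial>?J) = 0"
        proof -
          have "(\<integral>z. Y h z \<partial>?J) = (\<integral>z. mu h - h z \<partial>?J)"
            by (rule integral_cong_AE[OF YmJ _ Yae]) (use hmJ' in measurable)
          also have "\<dots> = mu h - mu h"
            using hint[OF hG] by (simp add: Bochner_Integration.integral_diff J.prob_space mu_int[of h])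
          finally show ?thesis by simp
        qed
        have EY2: "(\<integral>z. (Y h z)\<^sup>2 \<partial>?J) \<le> Vr"
        proof -
          have m1: "(\<lambda>z. (Y h z)\<^sup>2) \<in> borel_measurable ?J" using YmJ by measurable
          have m2: "(\<lambda>z. (h z)\<^sup>2 + ((mu h)\<^sup>2 - 2 * mu h * h z)) \<in> borel_measurable ?J" using hmJ' by measurable
          have "(\<integral>z. (Y h z)\<^sup>2 \<partial>?J) = (\<integral>z. (h z)\<^sup>2 + ((mu h)\<^sup>2 - 2 * mu h * h z) \<partial>?J)"
          proof (rule integral_cong_AE[OF m1 m2])
            show "AE z in ?J. (Y h z)\<^sup>2 = (h z)\<^sup>2 + ((mu h)\<^sup>2 - 2 * mu h * h z)"
              using Yae
            proof eventually_elim
              fix z assume a: "Y h z = mu h - h z"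
              show "(Y h z)\<^sup>2 = (h z)\<^sup>2 + ((mu h)\<^sup>2 - 2 * mu h * h z)"
                unfolding a by (simp add: power2_eq_square algebra_simps)
            qed
          qed
          also have "\<dots> = (\<integral>z. (h z)\<^sup>2 \<partial>?J) + ((mu h)\<^sup>2 - 2 * mu h * mu h)"
            using hint[OF hG] h2int[OF hG]
            by (simp add: Bochner_Integration.integral_add Bochner_Integration.integral_diff J.prob_space mu_int[of h])
          also have "\<dots> \<le> (\<integral>z. (h z)\<^sup>2 \<partial>?J)" by (simp add: power2_eq_square)
          also have "\<dots> \<le> c * mu h" using G_var[OF hG] unfolding mu_def expect_def .
          also have "\<dots> \<le> Vr" unfolding Vr_def m_def using c eps by simp
          finally show ?thesis .
        qed
        note ch = N.chernoff[OF Ym Yb EY EY2 l0 lB wf ssum, of tt]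
        have tm: "tt \<le> m"
        proof -
          have "sqrt \<epsilon> \<le> sqrt m" using em by simp
          then have "\<alpha> * sqrt \<epsilon> \<le> sqrt m" using alpha eps
            by (meson mult_left_le_one_le order.trans real_sqrt_ge_zero less_imp_le)
          then have "\<alpha> * sqrt \<epsilon> * sqrt m \<le> sqrt m * sqrt m" by (rule mult_right_mono) (use m0 in simp)
          then show ?thesis using m0 by (simp add: tt_eq)
        qed
        have t2: "tt * tt = (\<alpha>\<^sup>2 * \<epsilon>) * m"
        proof -
          have "tt * tt = \<alpha> * \<alpha> * (sqrt \<epsilon> * sqrt \<epsilon>) * (sqrt m * sqrt m)" by (simp add: tt_eq mult_ac)
          also have "\<dots> = (\<alpha>\<^sup>2 * \<epsilon>) * m" using eps m0 by (simp add: power2_eq_square)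
          finally show ?thesis .
        qed
        have ea: "- (l * s * tt) + s * (l\<^sup>2 * Vr / (2 * (1 - l * B / 3))) \<le> - ((\<alpha>\<^sup>2 * \<epsilon>) * s) / (2 * c + 2 / 3 * B)"
          unfolding l_def D_def by (rule expo_alg[OF tt0 c m0 B0h s0 Vr_def tm t2])
        have beq: "- ((\<alpha>\<^sup>2 * \<epsilon>) * s) / (2 * c + 2 / 3 * B) = - (\<alpha>\<^sup>2 * s * \<epsilon>) / (2 * c + 2 / 3 * B)"
          by (simp add: mult_ac)
        have Bh_eq: "Bh h = {Z \<in> space ?P. s * tt < (\<Sum>i<n. w i * Y h (Z i))}" unfolding Bh_def tt_def ..
        show ?thesis
        proof
          show "Bh h \<in> sets ?P" unfolding Bh_eq by (rule ch(1))
          have "emeasure ?P (Bh h) \<le> ennreal (exp (- (l * s * tt) + s * (l\<^sup>2 * Vr / (2 * (1 - l * B / 3)))))"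
            unfolding Bh_eq by (rule ch(2))
          also have "\<dots> \<le> ennreal ?b" using ea[unfolded beq] by (intro ennreal_leI) simp
          finally show "emeasure ?P (Bh h) \<le> ennreal ?b" .
        qed
      qed

      have incl: "?ev \<subseteq> (\<Union>h\<in>C. Bh h) \<union> Nb"
      proof
        fix Z assume "Z \<in> ?ev"
        then have Zsp: "Z \<in> space ?P" and ex: "\<exists>g\<in>\<G>. (expect ?J g - weighted_emp_mean n w s g Z)
                 / sqrt (expect ?J g + \<epsilon>) > 4 * \<alpha> * sqrt \<epsilon>" by auto
        show "Z \<in> (\<Union>h\<in>C. Bh h) \<union> Nb"
        proof (cases "Z \<in> Nb")
          case False
          have Zi: "Z i \<in> space (Zspace k)" if "i < n" for i
            using Zsp N.space_PP that by (auto simp: space_PiM PiE_iff)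
          have ZiB: "Z i \<notin> Bd" if "i < n" for i using False Zsp that by (auto simp: Nb_def)
          have ZiZ: "Z i \<in> Zset k X" if "i < n" for i using Zi[OF that] ZiB[OF that] by (auto simp: Bd_def)
          have Zih: "\<bar>h (Z i) - mu h\<bar> \<le> B" if "i < n" "h \<in> C" for i h
            using Zi[OF that(1)] ZiB[OF that(1)] that(2) by (auto simp: Bd_def not_less)
          obtain g where gG: "g \<in> \<G>" and evg: "(mu g - weighted_emp_mean n w s g Z) / sqrt (mu g + \<epsilon>) > 4 * \<alpha> * sqrt \<epsilon>"
            using ex by (auto simp: mu_def)
          obtain h where hC: "h \<in> C" and hcov: "\<And>z. z \<in> Zset k X \<Longrightarrow> \<bar>g z - h z\<bar> \<le> \<alpha> * \<epsilon>"
            using cov[OF gG] by auto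
          have hG: "h \<in> \<G>" using hC CG by auto
          define Eg where "Eg = weighted_emp_mean n w s g Z"
          define Eh where "Eh = weighted_emp_mean n w s h Z"
          have sEh: "s * Eh = (\<Sum>i<n. w i * h (Z i))" using spos by (simp add: Eh_def weighted_emp_mean_def)
          have dE: "\<bar>Eg - Eh\<bar> \<le> \<alpha> * \<epsilon>"
          proof -
            have d: "Eg - Eh = (1 / s) * (\<Sum>i<n. w i * (g (Z i) - h (Z i)))"
              by (simp add: Eg_def Eh_def weighted_emp_mean_def sum_subtractf right_diff_distrib)
            have "\<bar>\<Sum>i<n. w i * (g (Z i) - h (Z i))\<bar> \<le> (\<Sum>i<n. \<bar>w i * (g (Z i) - h (Z i))\<bar>)" by (rule sum_abs)
            also have "\<dots> \<le> (\<Sum>i<n. w i * (\<alpha> * \<epsilon>))"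
            proof (rule sum_mono)
              fix i assume i: "i \<in> {..<n}"
              have "\<bar>w i * (g (Z i) - h (Z i))\<bar> = w i * \<bar>g (Z i) - h (Z i)\<bar>" using w0 i by (simp add: abs_mult)
              also have "\<dots> \<le> w i * (\<alpha> * \<epsilon>)" using hcov[OF ZiZ] w0 i by (intro mult_left_mono) auto
              finally show "\<bar>w i * (g (Z i) - h (Z i))\<bar> \<le> w i * (\<alpha> * \<epsilon>)" .
            qed
            also have "\<dots> = s * (\<alpha> * \<epsilon>)" by (simp add: ssum sum_distrib_right)
            finally have "\<bar>\<Sum>i<n. w i * (g (Z i) - h (Z i))\<bar> \<le> s * (\<alpha> * \<epsilon>)" .
            then have "(1 / s) * \<bar>\<Sum>i<n. w i * (g (Z i) - h (Z i))\<bar> \<le> (1 / s) * (s * (\<alpha> * \<epsilon>))"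
              using spos by (intro mult_left_mono) auto
            then show ?thesis using spos by (simp add: d abs_mult)
          qed
          have AEZ: "AE z in ?J. z \<in> Zset k X"
          proof -
            have s1: "space (Zspace k) - Zset k X \<in> sets ?J" using Zs N.sets_JJ by auto
            have s2: "{z \<in> space ?J. \<not> z \<in> Zset k X} = space (Zspace k) - Zset k X" using N.space_JJ by auto
            show ?thesis using AE_iff_measurable[OF s1 s2] Znull by simp
          qed
          have dm: "\<bar>mu g - mu h\<bar> \<le> \<alpha> * \<epsilon>"
          proof -
            have ig: "integrable ?J (\<lambda>z. g z - h z)" using hint[OF gG] hint[OF hG] by simp
            have d: "mu g - mu h = (\<integral>z. g z - h z \<partial>?J)"
              using hint[OF gG] hint[OF hG] by (simp add: mu_int Bochner_Integration.integral_diff)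
            have AEb: "AE z in ?J. \<bar>g z - h z\<bar> \<le> \<alpha> * \<epsilon>" using AEZ by eventually_elim (rule hcov)
            have "(\<integral>z. g z - h z \<partial>?J) \<le> (\<integral>z. \<alpha> * \<epsilon> \<partial>?J)"
              by (rule integral_mono_AE[OF ig]) (use AEb in \<open>auto simp: abs_le_iff\<close>)
            moreover have "(\<integral>z. - (\<alpha> * \<epsilon>) \<partial>?J) \<le> (\<integral>z. g z - h z \<partial>?J)"
              by (rule integral_mono_AE[OF _ ig]) (use AEb in \<open>auto simp: abs_le_iff\<close>)
            ultimately show ?thesis using d by (simp add: J.prob_space abs_le_iff)
          qed
          have sq0: "0 < sqrt (mu g + \<epsilon>)" using mu0[OF gG] eps by simp
          have evg': "4 * \<alpha> * sqrt \<epsilon> * sqrt (mu g + \<epsilon>) < mu g - Eg"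
            using evg sq0 unfolding Eg_def by (simp add: pos_less_divide_eq)
          have ca: "\<alpha> * sqrt \<epsilon> * sqrt (mu h + \<epsilon>) < mu h - Eh"
            by (rule cover_alg[OF alpha eps mu0[OF gG] mu0[OF hG] dm dE evg'])
          have "s * t h < s * (mu h - Eh)" unfolding t_def using ca spos by simp
          also have "s * (mu h - Eh) = (\<Sum>i<n. w i * Y h (Z i))"
          proof -
            have "(\<Sum>i<n. w i * Y h (Z i)) = (\<Sum>i<n. w i * (mu h - h (Z i)))"
            proof (rule sum.cong[OF refl])
              fix i assume i: "i \<in> {..<n}"
              have "Y h (Z i) = mu h - h (Z i)" using Zih[of i h] i hC by (auto simp: Y_def abs_le_iff)
              then show "w i * Y h (Z i) = w i * (mu h - h (Z i))" by simp
            qed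
            also have "\<dots> = mu h * (\<Sum>i<n. w i) - (\<Sum>i<n. w i * h (Z i))"
              by (simp add: right_diff_distrib sum_subtractf sum_distrib_left mult.commute)
            also have "\<dots> = s * mu h - s * Eh" using sEh by (simp add: ssum mult.commute)
            finally show ?thesis by (simp add: right_diff_distrib)
          qed
          finally have "Z \<in> Bh h" using Zsp by (simp add: Bh_def)
          then show ?thesis using hC by blast
        qed simp
      qed

      have UB: "(\<Union>h\<in>C. Bh h) \<in> sets ?P" using Bh_ok Cfin by auto
      show ?thesis
      proof (rule bexI[of _ "(\<Union>h\<in>C. Bh h) \<union> Nb"], rule conjI)
        show "?ev \<subseteq> (\<Union>h\<in>C. Bh h) \<union> Nb" by (rule incl)
        have "emeasure ?P ((\<Union>h\<in>C. Bh h) \<union> Nb) \<le> emeasure ?P (\<Union>h\<in>C. Bh h) + emeasure ?P Nb"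
          by (rule emeasure_subadditive[OF UB Nbs])
        also have "\<dots> = emeasure ?P (\<Union>h\<in>C. Bh h)" using Nb0 by simp
        also have "\<dots> \<le> (\<Sum>h\<in>C. emeasure ?P (Bh h))"
          by (rule emeasure_subadditive_finite[OF Cfin]) (use Bh_ok in auto)
        also have "\<dots> \<le> (\<Sum>h\<in>C. ennreal ?b)" by (rule sum_mono) (use Bh_ok in auto)
        also have "\<dots> = ennreal (real (card C)) * ennreal ?b" by (simp add: ennreal_of_nat_eq_real_of_nat)
        also have "\<dots> \<le> ?N * ennreal ?b" by (rule mult_right_mono[OF CN]) simp
        finally show "emeasure ?P ((\<Union>h\<in>C. Bh h) \<union> Nb) \<le> ?N * ennreal ?b" .
      qed (use Nbs UB in auto)
    qed
  qed
qed

end
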